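(* Let $D_1,D_2\subset\mathbb{C}$ be domains, and for $j=1,2$ let $p_j\colon E\to D_j$ be a holomorphic universal covering of $D_j$ which is not injective (i.e. $D_j$ has the unit disc as universal cover and is not simply connected). Then $h_{D_1\times D_2}\not\equiv\kappa_{D_1\times D_2}$, i.e. there exist $z\in D_1\times D_2$ and $X\in\mathbb{C}^2$ with $h_{D_1\times D_2}(z;X)\neq\kappa_{D_1\times D_2}(z;X)$.
   Context: $E$ denotes the open unit disc in $\mathbb{C}$, and $\mathcal{O}(E,D)$ the set of holomorphic maps $E\to D$. For a domain $D\subset\mathbb{C}^n$, $z\in D$, $X\in\mathbb{C}^n$, the Kobayashi–Royden pseudometric is $\kappa_D(z;X):=\inf\{|\alpha| : \exists f\in\mathcal{O}(E,D),\ f(0)=z,\ \alpha f'(0)=X\}$ and the Hahn pseudometric is $h_D(z;X):=\inf\{|\alpha| : \exists f\in\mathcal{O}(E,D) \text{ injective},\ f(0)=z,\ \alpha f'(0)=X\}$. *)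

theory Defs
  imports "HOL-Complex_Analysis.Complex_Analysis"
begin

definition unit_disc :: "complex set" where
  "unit_disc = ball 0 1"

text \<open>C^2 is modelled as complex \<times> complex. A map f from E to C^2 is holomorphic iff
  both coordinate functions are holomorphic on E; it lies in O(E,D) if moreover f(E) \<subseteq> D.\<close>
definition hol_disc_map :: "(complex \<times> complex) set \<Rightarrow> (complex \<Rightarrow> complex \<times> complex) \<Rightarrow> bool" where
  "hol_disc_map D f \<longleftrightarrow>
     (\<lambda>\<zeta>. fst (f \<zeta>)) holomorphic_on unit_disc \<and>
     (\<lambda>\<zeta>. snd (f \<zeta>)) holomorphic_on unit_disc \<and>
     f ` unit_disc \<subseteq> D"

definition deriv0 :: "(complex \<Rightarrow> complex \<times> complex) \<Rightarrow> complex \<times> complex" where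
  "deriv0 f = (deriv (\<lambda>\<zeta>. fst (f \<zeta>)) 0, deriv (\<lambda>\<zeta>. snd (f \<zeta>)) 0)"

definition cscale :: "complex \<Rightarrow> complex \<times> complex \<Rightarrow> complex \<times> complex" where
  "cscale a v = (a * fst v, a * snd v)"

definition kobayashi :: "(complex \<times> complex) set \<Rightarrow> complex \<times> complex \<Rightarrow> complex \<times> complex \<Rightarrow> real" where
  "kobayashi D z X = Inf {cmod \<alpha> | \<alpha>. \<exists>f. hol_disc_map D f \<and> f 0 = z \<and> cscale \<alpha> (deriv0 f) = X}"

definition hahn :: "(complex \<times> complex) set \<Rightarrow> complex \<times> complex \<Rightarrow> complex \<times> complex \<Rightarrow> real" where
  "hahn D z X = Inf {cmod \<alpha> | \<alpha>. \<exists>f. hol_disc_map D f \<and> inj_on f unit_disc \<and> f 0 = z \<and> cscale \<alpha> (deriv0 f) = X}"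

end

theory Submission
  imports Defs
begin

definition mob :: "complex \<times> complex \<Rightarrow> complex \<Rightarrow> complex" where
  "mob P z = (fst P * z + snd P) / (cnj (snd P) * z + cnj (fst P))"
definition mden :: "complex \<times> complex \<Rightarrow> complex \<Rightarrow> complex" where
  "mden P z = cnj (snd P) * z + cnj (fst P)"
definition mdet :: "complex \<times> complex \<Rightarrow> real" where
  "mdet P = (cmod (fst P))^2 - (cmod (snd P))^2"
definition mmul :: "complex \<times> complex \<Rightarrow> complex \<times> complex \<Rightarrow> complex \<times> complex" where
  "mmul P Q = (fst P * fst Q + snd P * cnj (snd Q), fst P * snd Q + snd P * cnj (fst Q))"
definition madj :: "complex \<times> complex \<Rightarrow> complex \<times> complex" where
  "madj P = (cnj (fst P), - snd P)"
definition dm :: "complex \<times> complex \<Rightarrow> complex \<Rightarrow> complex" where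
  "dm P z = of_real (mdet P) / (mden P z)^2"

lemma cmod_sq_eq: "complex_of_real ((cmod w)^2) = w * cnj w"
  by (rule complex_norm_square)

lemma mdet_complex: "complex_of_real (mdet P) = fst P * cnj (fst P) - snd P * cnj (snd P)"
  unfolding mdet_def of_real_diff cmod_sq_eq by simp

lemma mden_nz: assumes "mdet P > 0" "cmod z < 1" shows "mden P z \<noteq> 0"
proof
  assume h: "mden P z = 0"
  obtain A B where P: "P = (A,B)" by fastforce
  have "cmod B < cmod A" using assms(1) unfolding mdet_def P
    by (simp add: power_strict_mono) (smt (verit) norm_ge_zero power2_le_imp_le)
  have "cnj A = - cnj B * z" using h by (simp add: mden_def P algebra_simps add_eq_0_iff)
  hence "cmod A = cmod B * cmod z" by (metis complex_mod_cnj norm_minus_cancel norm_mult)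
  also have "\<dots> \<le> cmod B" using assms(2) by (simp add: mult_left_le)
  finally show False using \<open>cmod B < cmod A\<close> by simp
qed

lemma mob_norm_identity: assumes "mdet P > 0" "cmod z < 1"
  shows "1 - (cmod (mob P z))^2 = mdet P * (1 - (cmod z)^2) / (cmod (mden P z))^2"
proof -
  obtain A B where P: "P = (A,B)" by fastforce
  have d: "mden P z \<noteq> 0" using mden_nz assms by blast
  have key: "complex_of_real ((cmod (mden P z))^2 - (cmod (A*z+B))^2) = complex_of_real (mdet P * (1 - (cmod z)^2))"
    unfolding cmod_sq_eq of_real_diff of_real_mult mdet_complex
    by (simp add: P mden_def algebra_simps)
  hence key': "(cmod (mden P z))^2 - (cmod (A*z+B))^2 = mdet P * (1 - (cmod z)^2)" using of_real_eq_iff by blast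
  have "mob P z = (A*z+B) / mden P z" by (simp add: mob_def mden_def P)
  hence "(cmod (mob P z))^2 = (cmod (A*z+B))^2 / (cmod (mden P z))^2" by (simp add: norm_divide power_divide)
  thus ?thesis using d key' by (simp add: field_simps)
qed

lemma mob_in_disc: assumes "mdet P > 0" "cmod z < 1" shows "cmod (mob P z) < 1"
proof -
  have "mdet P * (1 - (cmod z)^2) / (cmod (mden P z))^2 > 0"
    using assms mden_nz by (simp add: abs_square_less_1)
  hence "(cmod (mob P z))^2 < 1" using mob_norm_identity[OF assms] by simp
  thus ?thesis using abs_square_less_1[of "cmod (mob P z)"] by simp
qed

lemma mdet_mmul: "mdet (mmul P Q) = mdet P * mdet Q"
proof -
  obtain A B where P: "P = (A,B)" by fastforce
  obtain C D where Q: "Q = (C,D)" by fastforce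
  have "complex_of_real (mdet (mmul P Q)) = complex_of_real (mdet P * mdet Q)"
    unfolding of_real_mult mdet_complex by (simp add: P Q mmul_def algebra_simps)
  thus ?thesis using of_real_eq_iff by blast
qed

lemma mdet_madj[simp]: "mdet (madj P) = mdet P"
  by (simp add: mdet_def madj_def)

lemma mmul_madj_left: "mmul (madj P) P = (of_real (mdet P), 0)"
  by (simp add: mmul_def madj_def mdet_complex algebra_simps)

lemma mmul_madj_right: "mmul P (madj P) = (of_real (mdet P), 0)"
  by (simp add: mmul_def madj_def mdet_complex algebra_simps)

lemma mmul_assoc: "mmul (mmul P Q) R = mmul P (mmul Q R)"
  by (simp add: mmul_def algebra_simps)

lemma mob_scalar: "k \<noteq> 0 \<Longrightarrow> mob (of_real k, 0) z = z"
  by (simp add: mob_def)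

lemma frac_lemma: "(d::complex) \<noteq> 0 \<Longrightarrow> (a*(n/d)+b)/(c*(n/d)+e) = (a*n+b*d)/(c*n+e*d)"
proof -
  assume d: "d \<noteq> 0"
  have 1: "a*(n/d)+b = (a*n+b*d)/d" using d by (simp add: field_simps)
  have 2: "c*(n/d)+e = (c*n+e*d)/d" using d by (simp add: field_simps)
  show ?thesis unfolding 1 2 using d by simp
qed

lemma mob_mmul: assumes "mdet P > 0" "mdet Q > 0" "cmod z < 1"
  shows "mob (mmul P Q) z = mob P (mob Q z)"
proof -
  obtain A B where P: "P = (A,B)" by fastforce
  obtain C D where Q: "Q = (C,D)" by fastforce
  have d1: "cnj D * z + cnj C \<noteq> 0" using mden_nz[OF assms(2,3)] by (simp add: mden_def Q)
  have w: "cmod (mob Q z) < 1" using mob_in_disc assms by blast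
  have d2: "cnj B * ((C * z + D) / (cnj D * z + cnj C)) + cnj A \<noteq> 0"
    using mden_nz[OF assms(1) w] by (simp add: mden_def P Q mob_def)
  have e1: "mob P (mob Q z) = (A*(C*z+D) + B*(cnj D*z+cnj C)) / (cnj B*(C*z+D) + cnj A*(cnj D*z+cnj C))"
    unfolding mob_def P Q fst_conv snd_conv using frac_lemma[OF d1] by simp
  have e2: "mob (mmul P Q) z = (A*(C*z+D) + B*(cnj D*z+cnj C)) / (cnj B*(C*z+D) + cnj A*(cnj D*z+cnj C))"
    unfolding mob_def mmul_def P Q fst_conv snd_conv
    by (rule arg_cong2[where f="(/)"]) (simp_all add: algebra_simps)
  show ?thesis using e1 e2 by simp
qed

lemma mob_madj: assumes "mdet P > 0" "cmod z < 1" shows "mob (madj P) (mob P z) = z"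
  using mob_mmul[of "madj P" P z] assms by (simp add: mmul_madj_left mob_scalar)

lemma mob_madj': assumes "mdet P > 0" "cmod z < 1" shows "mob P (mob (madj P) z) = z"
  using mob_mmul[of P "madj P" z] assms by (simp add: mmul_madj_right mob_scalar)

lemma mob_deriv: assumes "mden P z \<noteq> 0" shows "(mob P has_field_derivative dm P z) (at z)"
proof -
  obtain A B where P: "P = (A,B)" by fastforce
  have "((\<lambda>z. (A * z + B) / (cnj B * z + cnj A)) has_field_derivative
     ((A * (cnj B * z + cnj A) - (A * z + B) * cnj B) / (cnj B * z + cnj A)^2)) (at z)"
    using assms by (auto intro!: derivative_eq_intros simp: P mden_def power2_eq_square)
  moreover have "(A * (cnj B * z + cnj A) - (A * z + B) * cnj B) / (cnj B * z + cnj A)^2 = dm P z"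
    by (simp add: dm_def mdet_complex P mden_def algebra_simps)
  ultimately show ?thesis unfolding mob_def P by simp
qed

lemma mob_holo: "mdet P > 0 \<Longrightarrow> mob P holomorphic_on ball 0 1"
  using mob_deriv mden_nz by (metis field_differentiable_def holomorphic_on_open mem_ball_0 open_ball)

lemma dm_nz: "mdet P > 0 \<Longrightarrow> cmod z < 1 \<Longrightarrow> dm P z \<noteq> 0"
  using mden_nz by (simp add: dm_def)

lemma mden_mmul: assumes "mdet P > 0" "mdet Q > 0" "cmod z < 1"
  shows "mden (mmul P Q) z = mden P (mob Q z) * mden Q z"
proof -
  obtain A B where P: "P = (A,B)" by fastforce
  obtain C D where Q: "Q = (C,D)" by fastforce
  have d1: "cnj D * z + cnj C \<noteq> 0" using mden_nz[OF assms(2,3)] by (simp add: mden_def Q)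
  show ?thesis using d1 by (simp add: mden_def mob_def mmul_def P Q field_simps)
qed

lemma dm_mmul: assumes "mdet P > 0" "mdet Q > 0" "cmod z < 1"
  shows "dm (mmul P Q) z = dm P (mob Q z) * dm Q z"
  using assms by (simp add: dm_def mden_mmul mdet_mmul power_mult_distrib)

definition msc :: "real \<Rightarrow> complex \<times> complex \<Rightarrow> complex \<times> complex" where
  "msc k P = (of_real k * fst P, of_real k * snd P)"

lemma mob_eq_imp:
  assumes eq: "\<And>z. cmod z < 1 \<Longrightarrow> mob P z = mob P' z" and d: "mdet P > 0" "mdet P' > 0"
  shows "\<exists>k. k \<noteq> 0 \<and> P' = msc k P"
proof -
  obtain A B where P: "P = (A,B)" by fastforce
  obtain A' B' where P': "P' = (A',B')" by fastforce
  have cr: "(A*z+B)*(cnj B'*z+cnj A') = (A'*z+B')*(cnj B*z+cnj A)" if "cmod z < 1" for z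
  proof -
    have n1: "cnj B*z+cnj A \<noteq> 0" using mden_nz[OF d(1) that] by (simp add: mden_def P)
    have n2: "cnj B'*z+cnj A' \<noteq> 0" using mden_nz[OF d(2) that] by (simp add: mden_def P')
    have "(A*z+B)/(cnj B*z+cnj A) = (A'*z+B')/(cnj B'*z+cnj A')" using eq[OF that] by (simp add: mob_def P P')
    thus ?thesis using n1 n2 by (simp add: field_simps)
  qed
  define c2 where "c2 = A*cnj B' - A'*cnj B"
  define c1 where "c1 = A*cnj A' + B*cnj B' - A'*cnj A - B'*cnj B"
  define c0 where "c0 = B*cnj A' - B'*cnj A"
  have poly: "c2*z^2 + c1*z + c0 = 0" if "cmod z < 1" for z
    using cr[OF that] unfolding c2_def c1_def c0_def by (simp add: algebra_simps power2_eq_square)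
  have h0: "c0 = 0" using poly[of 0] by simp
  have h1: "c2/4 + c1/2 = 0" using poly[of "1/2"] h0 by (simp add: power2_eq_square)
  have h2: "c2/4 - c1/2 = 0" using poly[of "-1/2"] h0 by (simp add: power2_eq_square)
  have hc1: "c1 = 0" using h1 h2 by (simp add: field_simps)
  have "cmod B < cmod A" using d(1) unfolding mdet_def P
    by simp (smt (verit) norm_ge_zero power2_le_imp_le)
  hence A0: "A \<noteq> 0" by auto
  define k where "k = A' / A"
  have kA: "A' = k * A" using A0 by (simp add: k_def)
  have kB: "B' = cnj k * B"
  proof -
    have "B * cnj A' = B' * cnj A" using h0 by (simp add: c0_def)
    hence "B * cnj k * cnj A = B' * cnj A" by (simp add: kA)
    thus ?thesis using A0 by (simp add: mult.commute)
  qed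
  have eq0: "(cnj k - k) * (A * cnj A - B * cnj B) = 0"
    using hc1 unfolding c1_def kA kB by (simp add: algebra_simps)
  have X: "complex_of_real (mdet P) = A * cnj A - B * cnj B" using mdet_complex[of P] by (simp add: P)
  have nz: "A * cnj A - B * cnj B \<noteq> 0" using X d(1) by (metis of_real_eq_0_iff less_irrefl)
  have "cnj k = k" using eq0 nz by simp
  hence "Im k = 0" by (simp add: complex_eq_iff)
  hence kr: "k = of_real (Re k)" by (simp add: complex_eq_iff)
  have "k \<noteq> 0"
  proof
    assume "k = 0"
    hence "A' = 0" "B' = 0" by (simp_all add: kA kB)
    hence "mdet P' = 0" by (simp add: mdet_def P')
    thus False using d(2) by simp
  qed
  hence "Re k \<noteq> 0" using kr by (metis of_real_0)
  moreover have "P' = msc (Re k) P" 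
  proof -
    have ck: "cnj k = of_real (Re k)" using kr by (metis complex_cnj_complex_of_real)
    show ?thesis using kA kB kr ck by (simp add: msc_def P P')
  qed
  ultimately show ?thesis by blast
qed

definition tau :: "complex \<times> complex \<Rightarrow> real" where
  "tau P = (Re (fst P))^2 / mdet P"
definition sig :: "complex \<times> complex \<Rightarrow> real" where
  "sig P = Re (fst P) * Im (fst P) / mdet P"
definition mconj :: "complex \<times> complex \<Rightarrow> complex \<times> complex \<Rightarrow> complex \<times> complex" where
  "mconj Q P = mmul (madj Q) (mmul P Q)"
definition Ta :: "complex \<Rightarrow> complex \<times> complex" where
  "Ta a = (1, a)"

lemma mdet_msc: "mdet (msc k P) = k^2 * mdet P"
  by (simp add: mdet_def msc_def norm_mult power_mult_distrib algebra_simps)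

lemma tau_msc: "k \<noteq> 0 \<Longrightarrow> tau (msc k P) = tau P"
  unfolding tau_def mdet_msc by (simp add: msc_def power_mult_distrib)

lemma sig_msc: "k \<noteq> 0 \<Longrightarrow> sig (msc k P) = sig P"
  unfolding sig_def mdet_msc by (simp add: msc_def power2_eq_square)

lemma mob_msc: "k \<noteq> 0 \<Longrightarrow> mob (msc k P) z = mob P z"
proof -
  assume k: "k \<noteq> 0"
  have "(of_real k * fst P * z + of_real k * snd P) / (cnj (of_real k * snd P) * z + cnj (of_real k * fst P))
     = (of_real k * (fst P * z + snd P)) / (of_real k * (cnj (snd P) * z + cnj (fst P)))"
    by (simp add: algebra_simps)
  also have "\<dots> = mob P z" using k by (simp add: mob_def)
  finally show ?thesis by (simp add: mob_def msc_def)
qed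

lemma mdet_mconj: "mdet (mconj Q P) = (mdet Q)^2 * mdet P"
  by (simp add: mconj_def mdet_mmul power2_eq_square)

lemma fst_mconj: "fst (mconj Q P) = of_real ((cmod (fst Q))^2) * fst P - of_real ((cmod (snd Q))^2) * cnj (fst P)
   + cnj (fst Q) * cnj (snd Q) * snd P - cnj (cnj (fst Q) * cnj (snd Q) * snd P)"
  unfolding cmod_sq_eq by (simp add: mconj_def mmul_def madj_def algebra_simps)

lemma Re_fst_mconj: "Re (fst (mconj Q P)) = mdet Q * Re (fst P)"
  unfolding fst_mconj mdet_def by (simp add: algebra_simps)

lemma Im_fst_mconj: "Im (fst (mconj Q P)) = ((cmod (fst Q))^2 + (cmod (snd Q))^2) * Im (fst P)
   + 2 * Im (cnj (fst Q) * cnj (snd Q) * snd P)"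
  unfolding fst_mconj by (simp add: algebra_simps)

lemma tau_mconj: "mdet Q > 0 \<Longrightarrow> tau (mconj Q P) = tau P"
  by (simp add: tau_def mdet_mconj Re_fst_mconj power_mult_distrib power2_eq_square)

lemma tau_madj: "tau (madj P) = tau P"
  unfolding tau_def mdet_madj by (simp add: madj_def)

lemma sig_madj: "sig (madj P) = - sig P"
  unfolding sig_def mdet_madj by (simp add: madj_def)

lemma tau_sq: assumes "mdet P > 0" shows "tau (mmul P P) = (2 * tau P - 1)^2"
proof -
  obtain A B where P: "P = (A,B)" by fastforce
  have "Re (A*A + B * cnj B) = Re (A*A) + (cmod B)^2" using cmod_sq_eq[of B] by (metis Re_complex_of_real plus_complex.sel(1))
  also have "\<dots> = 2 * (Re A)^2 - mdet P"
  proof -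
    have c: "(cmod A)^2 = (Re A)^2 + (Im A)^2" by (rule cmod_power2)
    show ?thesis unfolding mdet_def P fst_conv snd_conv c by (simp add: power2_eq_square)
  qed
  finally have e: "Re (fst (mmul P P)) = 2 * (Re A)^2 - mdet P" by (simp add: mmul_def P)
  show ?thesis using assms unfolding tau_def e mdet_mmul by (simp add: P field_simps power2_eq_square)
qed

lemma sig_mconj: assumes Q: "mdet Q > 0" and Pd: "mdet P > 0" and t: "tau P = 1" and s: "sig P \<noteq> 0"
  shows "sig (mconj Q P) * sig P > 0"
proof -
  obtain A B where P: "P = (A,B)" by fastforce
  obtain C D where Qe: "Q = (C,D)" by fastforce
  have ReA: "(Re A)^2 = mdet P" using t Pd by (simp add: tau_def P)
  have ImA: "Im A \<noteq> 0" "Re A \<noteq> 0" using s by (auto simp: sig_def P)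
  have c: "(cmod A)^2 = (Re A)^2 + (Im A)^2" by (rule cmod_power2)
  have "(cmod B)^2 = (Im A)^2" using ReA unfolding mdet_def P fst_conv snd_conv c by simp
  hence "sqrt ((cmod B)^2) = sqrt ((Im A)^2)" by simp
  hence nB: "cmod B = \<bar>Im A\<bar>" by simp
  have CD: "cmod D < cmod C" using Q unfolding mdet_def Qe
    by simp (smt (verit) norm_ge_zero power2_le_imp_le)
  have lt: "2 * cmod C * cmod D < (cmod C)^2 + (cmod D)^2"
  proof -
    have "0 < (cmod C - cmod D)^2" using CD by simp
    thus ?thesis by (simp add: power2_eq_square algebra_simps)
  qed
  define w where "w = cnj C * cnj D * B"
  have "\<bar>Im w\<bar> \<le> cmod C * cmod D * \<bar>Im A\<bar>"
    using abs_Im_le_cmod[of w] by (simp add: w_def norm_mult nB)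
  have IA: "Im (fst (mconj Q P)) * Im A > 0"
  proof -
    have "Im (fst (mconj Q P)) * Im A = ((cmod C)^2 + (cmod D)^2) * (Im A)^2 + 2 * Im w * Im A"
      by (simp add: Im_fst_mconj Qe P w_def power2_eq_square algebra_simps)
    moreover have "\<bar>2 * Im w * Im A\<bar> \<le> 2 * cmod C * cmod D * (Im A)^2"
    proof -
      have h2: "\<bar>Im w\<bar> * \<bar>Im A\<bar> \<le> cmod C * cmod D * \<bar>Im A\<bar> * \<bar>Im A\<bar>"
        using mult_right_mono[OF \<open>\<bar>Im w\<bar> \<le> _\<close> abs_ge_zero] by simp
      have e1: "\<bar>2 * Im w * Im A\<bar> = 2 * (\<bar>Im w\<bar> * \<bar>Im A\<bar>)" by (simp add: abs_mult)
      have e2: "(Im A)^2 = \<bar>Im A\<bar> * \<bar>Im A\<bar>" by (simp add: power2_eq_square)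
      show ?thesis unfolding e1 e2 using h2 by simp
    qed
    moreover have "2 * cmod C * cmod D * (Im A)^2 < ((cmod C)^2 + (cmod D)^2) * (Im A)^2"
      using lt ImA by (simp add: mult_strict_right_mono)
    ultimately show ?thesis by linarith
  qed
  have "sig (mconj Q P) * sig P = mdet Q * (Re A)^2 * (Im (fst (mconj Q P)) * Im A) / ((mdet Q)^2 * mdet P * mdet P)"
    unfolding sig_def mdet_mconj Re_fst_mconj by (simp add: P power2_eq_square algebra_simps)
  moreover have "mdet Q * (Re A)^2 * (Im (fst (mconj Q P)) * Im A) > 0" using Q ImA IA by simp
  ultimately show ?thesis using Q Pd by simp
qed

lemma mdet_Ta: "mdet (Ta a) = 1 - (cmod a)^2" by (simp add: mdet_def Ta_def)
lemma mdet_Ta_pos: "cmod a < 1 \<Longrightarrow> mdet (Ta a) > 0" by (simp add: mdet_Ta abs_square_less_1)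
lemma mob_Ta0: "mob (Ta a) 0 = a" by (simp add: mob_def Ta_def)
lemma mob_madjTa: "mob (madj (Ta a)) a = 0" by (simp add: mob_def Ta_def madj_def)

lemma fp_tau: assumes R: "mdet R > 0" and a: "cmod a < 1" and fp: "mob R a = a" shows "tau R \<le> 1"
proof -
  let ?T = "Ta a"
  have T: "mdet ?T > 0" using mdet_Ta_pos[OF a] .
  have RT: "mdet (mmul R ?T) > 0" using R T by (simp add: mdet_mmul)
  have "mob (mconj ?T R) 0 = mob (madj ?T) (mob (mmul R ?T) 0)"
    unfolding mconj_def by (rule mob_mmul) (use T RT in auto)
  also have "mob (mmul R ?T) 0 = mob R (mob ?T 0)" by (rule mob_mmul) (use R T in auto)
  finally have "mob (mconj ?T R) 0 = 0" by (simp add: mob_Ta0 fp mob_madjTa)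
  moreover have "mdet (mconj ?T R) > 0" using R T by (simp add: mdet_mconj)
  ultimately have "snd (mconj ?T R) = 0" by (auto simp: mob_def mdet_def)
  hence "tau (mconj ?T R) \<le> 1" using \<open>mdet (mconj ?T R) > 0\<close>
    by (simp add: tau_def mdet_def cmod_power2)
  thus ?thesis using tau_mconj[OF T] by simp
qed

lemma fp_deriv: assumes R: "mdet R > 0" and a: "cmod a < 1" and fp: "mob R a = a" and d1: "dm R a = 1"
  shows "snd R = 0 \<and> Im (fst R) = 0"
proof -
  obtain A B where Re: "R = (A,B)" by fastforce
  define D where "D = cnj B * a + cnj A"
  have Dn: "D \<noteq> 0" using mden_nz[OF R a] by (simp add: mden_def Re D_def)
  have fxp: "A * a + B = a * D" using fp Dn by (simp add: mob_def Re D_def field_simps)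
  have D2: "D^2 = of_real (mdet R)" using d1 Dn by (simp add: dm_def mden_def Re D_def field_simps)
  have DR: "Im D = 0"
  proof -
    have "Im (D^2) = 0" "Re (D^2) > 0" using D2 R by auto
    hence "2 * Re D * Im D = 0" "(Re D)^2 - (Im D)^2 > 0" by (auto simp: power2_eq_square)
    thus ?thesis by auto
  qed
  hence Dc: "cnj D = D" by (simp add: complex_eq_iff)
  have B: "B = a * (D - A)" using fxp by (simp add: algebra_simps)
  have "D = cnj (a * (D - A)) * a + cnj A" using B D_def by simp
  hence "D = (cnj a * a) * D - (cnj a * a) * cnj A + cnj A" using Dc by (simp add: algebra_simps)
  hence "(1 - cnj a * a) * (D - cnj A) = 0" by (simp add: algebra_simps)
  moreover have "1 - cnj a * a \<noteq> 0"
  proof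
    assume "1 - cnj a * a = 0"
    hence "complex_of_real ((cmod a)^2) = 1" unfolding cmod_sq_eq by (simp add: mult.commute)
    hence "(cmod a)^2 = 1" by (metis of_real_eq_1_iff)
    thus False using a by (simp add: abs_square_eq_1)
  qed
  ultimately have "D = cnj A" by simp
  hence "A = D" using Dc by (metis complex_cnj_cnj)
  thus ?thesis using B DR by (simp add: Re)
qed

lemma tau_lt_fp: assumes R: "mdet R > 0" and t1: "tau R < 1" shows "\<exists>a. cmod a < 1 \<and> mob R a = a"
proof -
  obtain A B where Re: "R = (A,B)" by fastforce
  show ?thesis
  proof (cases "B = 0")
    case True
    thus ?thesis by (intro exI[of _ 0]) (simp add: mob_def Re)
  next
    case Bn: False
    define y where "y = Im A"
    define s where "s = sqrt (mdet R - (Re A)^2)"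
    have lt: "(Re A)^2 < mdet R" using t1 R by (simp add: tau_def Re)
    hence s0: "s > 0" by (simp add: s_def)
    have s2: "s^2 = mdet R - (Re A)^2" using lt by (simp add: s_def)
    have c: "(cmod A)^2 = (Re A)^2 + (Im A)^2" by (rule cmod_power2)
    have B2: "(cmod B)^2 = y^2 - s^2" using s2 unfolding mdet_def Re fst_conv snd_conv c y_def by simp
    have Bp: "(cmod B)^2 > 0" using Bn by simp
    obtain t where t1: "t^2 - 2*y*t + (cmod B)^2 = 0" and t2: "t^2 < (cmod B)^2"
    proof (cases "y > 0")
      case True
      hence "y > s" using B2 Bp s0 by (smt (verit) power_mono)
      show ?thesis
      proof (rule that[of "y - s"])
        show "(y - s)^2 - 2*y*(y - s) + (cmod B)^2 = 0" using B2 by (simp add: power2_eq_square algebra_simps)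
        have "(y - s)^2 < (y - s) * (y + s)" using \<open>y > s\<close> s0 by (simp add: power2_eq_square)
        thus "(y - s)^2 < (cmod B)^2" using B2 by (simp add: power2_eq_square algebra_simps)
      qed
    next
      case False
      hence "- y > s" using B2 Bp s0 by (smt (verit) power_mono power2_minus)
      show ?thesis
      proof (rule that[of "y + s"])
        show "(y + s)^2 - 2*y*(y + s) + (cmod B)^2 = 0" using B2 by (simp add: power2_eq_square algebra_simps)
        have "(y + s) * s < 0" using \<open>- y > s\<close> s0 by (intro mult_neg_pos) auto
        hence "(y + s)^2 < (y + s) * (y - s)" by (simp add: power2_eq_square algebra_simps)
        thus "(y + s)^2 < (cmod B)^2" using B2 by (simp add: power2_eq_square algebra_simps)
      qed
    qed
    define a where "a = \<i> * of_real t / cnj B"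
    have cBn: "cnj B \<noteq> 0" using Bn by simp
    have na: "cmod a < 1"
    proof -
      have "\<bar>t\<bar> < cmod B" using power2_less_imp_less[of "\<bar>t\<bar>" "cmod B"] t2 by simp
      thus ?thesis using Bn by (simp add: a_def norm_divide norm_mult)
    qed
    have hB: "B * cnj B = of_real ((cmod B)^2)" by (rule cmod_sq_eq[symmetric])
    have hA: "cnj A - A = - (2 * \<i> * of_real y)" by (simp add: complex_eq_iff y_def)
    have eq: "cnj B * a^2 + (cnj A - A) * a - B = 0"
    proof -
      have "cnj B * a^2 + (cnj A - A) * a - B = (- (t^2) + 2*y*t - (cmod B)^2) / cnj B"
        unfolding hA a_def using cBn hB
        by (simp add: field_simps power2_eq_square)
      also have "\<dots> = 0" using t1 by (simp add: algebra_simps)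
      finally show ?thesis .
    qed
    have dn: "cnj B * a + cnj A \<noteq> 0" using mden_nz[OF R na] by (simp add: mden_def Re)
    have "A * a + B = a * (cnj B * a + cnj A)" using eq by (simp add: algebra_simps power2_eq_square)
    hence "mob R a = a" using dn by (simp add: mob_def Re field_simps)
    thus ?thesis using na by blast
  qed
qed

definition pd :: "complex \<Rightarrow> complex \<Rightarrow> real" where
  "pd x y = cmod (mob (madj (Ta y)) x)"

definition disp :: "complex \<times> complex \<Rightarrow> complex \<Rightarrow> real" where
  "disp P w = pd (mob P w) w"

lemma mob_madjTa_eq: "mob (madj (Ta y)) x = (x - y) / (1 - cnj y * x)"
  by (simp add: mob_def madj_def Ta_def algebra_simps)

lemma pd_lt1: "cmod x < 1 \<Longrightarrow> cmod y < 1 \<Longrightarrow> pd x y < 1"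
  unfolding pd_def by (rule mob_in_disc) (simp_all add: mdet_Ta_pos)

lemma mob_inj: assumes "mdet P > 0" "cmod x < 1" "cmod y < 1" "mob P x = mob P y" shows "x = y"
  using mob_madj[OF assms(1,2)] mob_madj[OF assms(1,3)] assms(4) by metis

lemma two_point:
  assumes a: "cmod a < 1" "cmod a' < 1" and s: "cmod s < 1" "cmod s' < 1" and ne: "a \<noteq> a'"
    and eq: "pd a' a = pd s' s"
  shows "\<exists>M. mdet M > 0 \<and> mob M a = s \<and> mob M a' = s'"
proof -
  define x where "x = mob (madj (Ta a)) a'"
  define y where "y = mob (madj (Ta s)) s'"
  have Ta: "mdet (Ta a) > 0" "mdet (madj (Ta a)) > 0" using mdet_Ta_pos[OF a(1)] by auto
  have Ts: "mdet (Ta s) > 0" "mdet (madj (Ta s)) > 0" using mdet_Ta_pos[OF s(1)] by auto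
  have nxy: "cmod x = cmod y" using eq by (simp add: pd_def x_def y_def)
  have x0: "x \<noteq> 0"
  proof
    assume "x = 0"
    hence "mob (Ta a) x = a" by (simp add: mob_Ta0)
    moreover have "mob (Ta a) x = a'" unfolding x_def using mob_madj'[OF Ta(1) a(2)] by simp
    ultimately show False using ne by simp
  qed
  define \<mu> where "\<mu> = csqrt (y / x)"
  have nyx: "cmod (y / x) = 1" using nxy x0 by (simp add: norm_divide) (metis norm_eq_zero)
  have nmu: "cmod \<mu> = 1" using nyx by (simp add: \<mu>_def)
  have mu2: "\<mu>^2 = y / x" by (simp add: \<mu>_def)
  have mumu: "\<mu> * cnj \<mu> = 1" using nmu cmod_sq_eq[of \<mu>] by simp
  define Rot where "Rot = (\<mu>, 0::complex)"
  have Rd: "mdet Rot > 0" using nmu by (simp add: mdet_def Rot_def)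
  have Rw: "mob Rot w = (y / x) * w" for w
  proof -
    have cm: "cnj \<mu> \<noteq> 0" using nmu by auto
    have "mob Rot w = \<mu> * w / cnj \<mu>" by (simp add: mob_def Rot_def)
    also have "\<dots> = \<mu>^2 * w" using mumu cm by (simp add: field_simps power2_eq_square)
    finally show ?thesis using mu2 by simp
  qed
  define M where "M = mmul (Ta s) (mmul Rot (madj (Ta a)))"
  have d1: "mdet (mmul Rot (madj (Ta a))) > 0" using Rd Ta by (simp add: mdet_mmul)
  have Md: "mdet M > 0" using Ts d1 by (simp add: M_def mdet_mmul)
  have Mz: "mob M z = mob (Ta s) (mob Rot (mob (madj (Ta a)) z))" if "cmod z < 1" for z
  proof -
    have "mob M z = mob (Ta s) (mob (mmul Rot (madj (Ta a))) z)"
      unfolding M_def by (rule mob_mmul[OF Ts(1) d1 that])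
    also have "mob (mmul Rot (madj (Ta a))) z = mob Rot (mob (madj (Ta a)) z)"
      by (rule mob_mmul[OF Rd Ta(2) that])
    finally show ?thesis .
  qed
  have "mob M a = s" using Mz[OF a(1)] by (simp add: mob_madjTa Rw mob_Ta0)
  moreover have "mob M a' = s'"
  proof -
    have "mob M a' = mob (Ta s) ((y / x) * x)" using Mz[OF a(2)] by (simp add: Rw x_def)
    also have "\<dots> = mob (Ta s) y" using x0 by simp
    also have "\<dots> = s'" unfolding y_def by (rule mob_madj'[OF Ts(1) s(2)])
    finally show ?thesis .
  qed
  ultimately show ?thesis using Md by blast
qed

definition GG :: "complex \<times> complex \<Rightarrow> complex \<Rightarrow> complex" where
  "GG P w = cnj (snd P) * w + cnj (fst P) - fst P * w * cnj w - snd P * cnj w"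

lemma disp_identity: assumes P: "mdet P > 0" and w: "cmod w < 1"
  shows "1 - (disp P w)^2 = mdet P * (1 - (cmod w)^2)^2 / (cmod (GG P w))^2 \<and> GG P w \<noteq> 0"
proof -
  define m where "m = mob P w"
  have m: "cmod m < 1" using mob_in_disc[OF P w] by (simp add: m_def)
  have T: "mdet (madj (Ta w)) > 0" using mdet_Ta_pos[OF w] by simp
  have i1: "1 - (disp P w)^2 = mdet (madj (Ta w)) * (1 - (cmod m)^2) / (cmod (mden (madj (Ta w)) m))^2"
    unfolding disp_def pd_def m_def[symmetric] by (rule mob_norm_identity[OF T m])
  have i2: "1 - (cmod m)^2 = mdet P * (1 - (cmod w)^2) / (cmod (mden P w))^2"
    unfolding m_def by (rule mob_norm_identity[OF P w])
  have dn: "mden P w \<noteq> 0" using mden_nz[OF P w] .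
  have d2: "mden (madj (Ta w)) m \<noteq> 0" using mden_nz[OF T m] .
  have G: "mden (madj (Ta w)) m = GG P w / mden P w"
    using dn by (simp add: m_def mden_def mob_def madj_def Ta_def GG_def field_simps)
  have Gn: "GG P w \<noteq> 0" using G d2 by auto
  have "1 - (disp P w)^2 = (1 - (cmod w)^2) * (mdet P * (1 - (cmod w)^2) / (cmod (mden P w))^2)
      / ((cmod (GG P w))^2 / (cmod (mden P w))^2)"
    unfolding i1 i2[symmetric] G by (simp add: mdet_Ta norm_divide power_divide)
  also have "\<dots> = mdet P * (1 - (cmod w)^2)^2 / (cmod (GG P w))^2"
    using dn Gn by (simp add: field_simps power2_eq_square)
  finally show ?thesis using Gn by simp
qed

lemma disp_large: assumes P: "mdet P > 0" and Bn: "snd P \<noteq> 0" and d: "d < 1"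
  shows "\<exists>w. cmod w < 1 \<and> d \<le> disp P w"
proof -
  obtain A B where Pe: "P = (A,B)" by fastforce
  have B0: "B \<noteq> 0" using Bn by (simp add: Pe)
  define \<sigma> :: real where "\<sigma> = (if Im A = cmod B then -1 else 1)"
  have sne: "\<sigma> * cmod B \<noteq> Im A" using B0 by (auto simp: \<sigma>_def)
  have s2: "\<sigma> * \<sigma> = 1" by (simp add: \<sigma>_def)
  define \<xi> where "\<xi> = \<i> * of_real \<sigma> * B / of_real (cmod B)"
  have hB: "B * cnj B = of_real ((cmod B)^2)" by (rule cmod_sq_eq[symmetric])
  have nB: "complex_of_real (cmod B) \<noteq> 0" using B0 by simp
  have nxi: "cmod \<xi> = 1" using B0 by (simp add: \<xi>_def norm_mult norm_divide \<sigma>_def)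
  have xx: "\<xi> * cnj \<xi> = 1" using cmod_sq_eq[of \<xi>] nxi by simp
  have G0: "GG P \<xi> = 2 * \<i> * of_real (\<sigma> * cmod B - Im A)"
  proof -
    have e1: "cnj B * \<xi> = \<i> * of_real (\<sigma> * cmod B)"
      unfolding \<xi>_def using nB hB by (simp add: field_simps power2_eq_square mult.commute)
    have e2: "B * cnj \<xi> = - \<i> * of_real (\<sigma> * cmod B)"
      unfolding \<xi>_def using nB hB by (simp add: field_simps power2_eq_square mult.commute)
    have e3: "cnj A - A = - (2 * \<i> * of_real (Im A))" by (simp add: complex_eq_iff)
    have "GG P \<xi> = cnj B * \<xi> + (cnj A - A * (\<xi> * cnj \<xi>)) - B * cnj \<xi>"
      by (simp add: GG_def Pe algebra_simps)
    also have "\<dots> = \<i> * of_real (\<sigma> * cmod B) + (cnj A - A) + \<i> * of_real (\<sigma> * cmod B)"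
      unfolding e1 e2 xx by simp
    also have "\<dots> = 2 * \<i> * of_real (\<sigma> * cmod B - Im A)" unfolding e3 by (simp add: algebra_simps)
    finally show ?thesis .
  qed
  have Gn: "GG P \<xi> \<noteq> 0"
  proof -
    have "\<sigma> * cmod B - Im A \<noteq> 0" using sne by simp
    thus ?thesis unfolding G0 by (auto simp del: of_real_diff of_real_mult)
  qed
  define F where "F t = mdet P * (1 - t^2)^2 / (cmod (GG P (of_real t * \<xi>)))^2" for t :: real
  have cont: "continuous_on UNIV (\<lambda>t::real. GG P (of_real t * \<xi>))"
    unfolding GG_def by (intro continuous_intros)
  have g: "((\<lambda>t. GG P (of_real t * \<xi>)) \<longlongrightarrow> GG P \<xi>) (at_left 1)"
  proof -
    have "isCont (\<lambda>t::real. GG P (of_real t * \<xi>)) 1"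
      using cont by (simp add: continuous_on_eq_continuous_at)
    hence "((\<lambda>t. GG P (of_real t * \<xi>)) \<longlongrightarrow> GG P (of_real 1 * \<xi>)) (at 1)" by (rule isContD)
    hence "((\<lambda>t. GG P (of_real t * \<xi>)) \<longlongrightarrow> GG P \<xi>) (at 1)" by simp
    thus ?thesis by (rule tendsto_mono[OF at_within_le_at])
  qed
  have n: "((\<lambda>t. (cmod (GG P (of_real t * \<xi>)))^2) \<longlongrightarrow> (cmod (GG P \<xi>))^2) (at_left 1)"
    by (intro tendsto_power tendsto_norm g)
  have num: "((\<lambda>t::real. mdet P * (1 - t^2)^2) \<longlongrightarrow> mdet P * (1 - 1^2)^2) (at_left 1)"
    by (intro tendsto_intros)
  have "(F \<longlongrightarrow> mdet P * (1 - 1^2)^2 / (cmod (GG P \<xi>))^2) (at_left 1)"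
    unfolding F_def by (rule tendsto_divide[OF num n]) (use Gn in simp)
  hence F0: "(F \<longlongrightarrow> 0) (at_left 1)" by simp
  define d' where "d' = max d 0"
  have d'1: "d' < 1" "0 \<le> d'" using d by (auto simp: d'_def)
  have "0 < 1 - d'^2" using d'1 abs_square_less_1[of d'] by simp
  hence ev1: "eventually (\<lambda>t. F t < 1 - d'^2) (at_left 1)" using order_tendstoD(2)[OF F0] by blast
  have ev2: "eventually (\<lambda>t. t \<in> {0<..<(1::real)}) (at_left 1)"
    by (rule eventually_at_left_real) simp
  obtain t where t: "F t < 1 - d'^2" "0 < t" "t < 1"
    using eventually_happens[OF eventually_conj[OF ev1 ev2]] trivial_limit_at_left_real by auto
  define w where "w = of_real t * \<xi>"
  have nw: "cmod w = t" using nxi t by (simp add: w_def norm_mult)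
  have w1: "cmod w < 1" using nw t by simp
  have "1 - (disp P w)^2 = F t" using disp_identity[OF P w1] nw by (simp add: F_def w_def)
  hence "d'^2 < (disp P w)^2" using t by simp
  hence "d' < disp P w" using power2_less_imp_less[of d' "disp P w"] by (simp add: disp_def pd_def)
  thus ?thesis using w1 by (intro exI[of _ w]) (simp add: d'_def)
qed

lemma disp_cont: assumes P: "mdet P > 0" shows "continuous_on (ball 0 1) (disp P)"
proof -
  have e: "disp P w = cmod ((mob P w - w) / (1 - cnj w * mob P w))" for w
    by (simp add: disp_def pd_def mob_madjTa_eq)
  have cm: "continuous_on (ball 0 1) (mob P)" using mob_holo[OF P] holomorphic_on_imp_continuous_on by blast
  have nz: "cnj w * mob P w \<noteq> 1" if "cmod w < 1" for w
  proof
    assume "cnj w * mob P w = 1"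
    hence "cmod (cnj w * mob P w) = 1" by simp
    moreover have "cmod (mob P w) < 1" using mob_in_disc[OF P] that by simp
    moreover have "cmod w * cmod (mob P w) \<le> cmod (mob P w)"
      using that by (simp add: mult_left_le_one_le)
    ultimately show False by (simp add: norm_mult)
  qed
  show ?thesis unfolding e by (intro continuous_intros cm) (auto dest: nz)
qed

lemma ivt_disp: assumes P: "mdet P > 0" and Bn: "snd P \<noteq> 0" and d0: "disp P 0 \<le> d" and d1: "d < 1"
  shows "\<exists>a. cmod a < 1 \<and> disp P a = d"
proof -
  obtain w where w: "cmod w < 1" "d \<le> disp P w" using disp_large[OF P Bn d1] by blast
  have sub: "(\<lambda>t::real. of_real t * w) ` {0..1} \<subseteq> ball 0 1"
  proof
    fix z assume "z \<in> (\<lambda>t::real. of_real t * w) ` {0..1}"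
    then obtain t where "t \<in> {0..1}" "z = of_real t * w" by auto
    hence "cmod z \<le> cmod w" by (simp add: norm_mult mult_left_le_one_le)
    thus "z \<in> ball 0 1" using w by simp
  qed
  have c: "continuous_on {0..1} (\<lambda>t::real. disp P (of_real t * w))"
    by (rule continuous_on_compose2[OF disp_cont[OF P] _ sub]) (intro continuous_intros)
  obtain t where t: "0 \<le> t" "t \<le> 1" "disp P (of_real t * w) = d"
    using IVT'[of "\<lambda>t. disp P (of_real t * w)" 0 d 1] d0 w c by auto
  have "t * cmod w \<le> cmod w" using t by (simp add: mult_left_le_one_le)
  hence "cmod (of_real t * w) < 1" using t w by (simp add: norm_mult)
  thus ?thesis using t by blast
qed

lemma disp_match: assumes "mdet P1 > 0" "snd P1 \<noteq> 0" "mdet P2 > 0" "snd P2 \<noteq> 0"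
  shows "\<exists>a s. cmod a < 1 \<and> cmod s < 1 \<and> disp P1 a = disp P2 s"
proof -
  have l1: "disp P1 0 < 1" unfolding disp_def by (rule pd_lt1) (use mob_in_disc assms in auto)
  have l2: "disp P2 0 < 1" unfolding disp_def by (rule pd_lt1) (use mob_in_disc assms in auto)
  show ?thesis
  proof (cases "disp P1 0 \<le> disp P2 0")
    case True
    then obtain a where "cmod a < 1" "disp P1 a = disp P2 0" using ivt_disp[OF assms(1,2) _ l2] by blast
    thus ?thesis by (intro exI[of _ a] exI[of _ 0]) simp
  next
    case False
    then obtain s where "cmod s < 1" "disp P2 s = disp P1 0" using ivt_disp[OF assms(3,4) _ l1] by fastforce
    thus ?thesis by (intro exI[of _ 0] exI[of _ s]) simp
  qed
qed

definition fpf :: "complex \<times> complex \<Rightarrow> bool" where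
  "fpf P \<longleftrightarrow> mdet P > 0 \<and> (\<forall>w. cmod w < 1 \<longrightarrow> mob P w \<noteq> w)"

lemma fpf_snd: assumes "fpf P" shows "snd P \<noteq> 0"
proof
  assume "snd P = 0"
  hence "mob P 0 = 0" by (simp add: mob_def)
  thus False using assms unfolding fpf_def by (metis norm_zero zero_less_one)
qed

lemma fpf_tau: assumes "fpf P" shows "tau P \<ge> 1"
proof (rule ccontr)
  assume "\<not> tau P \<ge> 1"
  hence "tau P < 1" by simp
  then obtain a where "cmod a < 1" "mob P a = a" using tau_lt_fp assms unfolding fpf_def by blast
  thus False using assms unfolding fpf_def by blast
qed

lemma fpf_sig: assumes "fpf P" "tau P = 1" shows "sig P \<noteq> 0"
proof
  assume s: "sig P = 0"
  obtain A B where Pe: "P = (A,B)" by fastforce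
  have d: "mdet P > 0" using assms by (simp add: fpf_def)
  have ReA: "(Re A)^2 = mdet P" using assms(2) d by (simp add: tau_def Pe)
  hence "Re A \<noteq> 0" using d by auto
  hence "Im A = 0" using s d by (simp add: sig_def Pe)
  have c: "(cmod A)^2 = (Re A)^2 + (Im A)^2" by (rule cmod_power2)
  have "(cmod B)^2 = 0" using ReA \<open>Im A = 0\<close> unfolding mdet_def Pe fst_conv snd_conv c by simp
  hence "B = 0" by simp
  thus False using fpf_snd[OF assms(1)] by (simp add: Pe)
qed

lemma fpf_madj: assumes "fpf P" shows "fpf (madj P)"
  unfolding fpf_def
proof (intro conjI allI impI)
  show "mdet (madj P) > 0" using assms by (simp add: fpf_def)
  fix w :: complex assume w: "cmod w < 1"
  show "mob (madj P) w \<noteq> w"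
  proof
    assume "mob (madj P) w = w"
    hence "mob P w = w" using mob_madj'[of P w] assms w by (simp add: fpf_def)
    thus False using assms w by (simp add: fpf_def)
  qed
qed

lemma tau_gt_fpf: assumes "mdet P > 0" "tau P > 1" shows "fpf P"
  unfolding fpf_def
proof (intro conjI allI impI)
  show "mdet P > 0" using assms by simp
  fix w :: complex assume w: "cmod w < 1"
  show "mob P w \<noteq> w" using fp_tau[OF assms(1) w] assms(2) by linarith
qed

lemma dm_scalar: "k \<noteq> 0 \<Longrightarrow> dm (of_real k, 0) z = 1"
  by (simp add: dm_def mdet_def mden_def power2_eq_square norm_mult)

lemma dm_inv: assumes "mdet P > 0" "cmod z < 1" shows "dm (madj P) (mob P z) * dm P z = 1"
proof -
  have "dm (mmul (madj P) P) z = dm (madj P) (mob P z) * dm P z"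
    by (rule dm_mmul) (use assms in auto)
  thus ?thesis using assms by (simp add: mmul_madj_left dm_scalar)
qed

lemma conj_inv:
  assumes M: "mdet M > 0" and X: "mdet X > 0" and Y: "mdet Y > 0"
    and eq: "\<And>z. cmod z < 1 \<Longrightarrow> mob (mconj M Y) z = mob X z"
  shows "tau X = tau Y \<and> (tau Y = 1 \<longrightarrow> sig Y \<noteq> 0 \<longrightarrow> sig X * sig Y > 0)"
proof -
  have dC: "mdet (mconj M Y) > 0" using M Y by (simp add: mdet_mconj)
  obtain k where k: "k \<noteq> 0" "mconj M Y = msc k X" using mob_eq_imp[OF _ X dC] eq by metis
  have "tau X = tau Y" using tau_msc[OF k(1), of X] k(2) tau_mconj[OF M, of Y] by simp
  moreover have "sig X * sig Y > 0" if "tau Y = 1" "sig Y \<noteq> 0"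
    using sig_mconj[OF M Y that] k sig_msc[OF k(1), of X] by simp
  ultimately show ?thesis by blast
qed

lemma config:
  assumes Pb: "fpf Pb" and Pg: "fpf Pg"
  shows "\<exists>X Y M a. (X = Pb \<or> X = mmul Pb Pb) \<and> (Y = Pg \<or> Y = madj Pg) \<and> mdet M > 0 \<and> cmod a < 1
     \<and> mob X a \<noteq> a \<and> mob M (mob X a) = mob Y (mob M a)
     \<and> dm X a * dm M (mob X a) \<noteq> dm Y (mob M a) * dm M a"
proof -
  have dPb: "mdet Pb > 0" and dPg: "mdet Pg > 0" using Pb Pg by (auto simp: fpf_def)
  have nc: "\<exists>X Y. (X = Pb \<or> X = mmul Pb Pb) \<and> (Y = Pg \<or> Y = madj Pg) \<and> fpf X \<and> fpf Y \<and>
     (\<forall>M. mdet M > 0 \<longrightarrow> \<not> (\<forall>z. cmod z < 1 \<longrightarrow> mob (mconj M Y) z = mob X z))"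
  proof -
    have t1: "tau Pb \<ge> 1" "tau Pg \<ge> 1" using fpf_tau Pb Pg by auto
    have gen: "\<exists>X Y. (X = Pb \<or> X = mmul Pb Pb) \<and> (Y = Pg \<or> Y = madj Pg) \<and> fpf X \<and> fpf Y \<and>
     (\<forall>M. mdet M > 0 \<longrightarrow> \<not> (\<forall>z. cmod z < 1 \<longrightarrow> mob (mconj M Y) z = mob X z))"
      if "X0 = Pb \<or> X0 = mmul Pb Pb" "Y0 = Pg \<or> Y0 = madj Pg" "fpf X0" "fpf Y0"
         "\<not> (tau X0 = tau Y0 \<and> (tau Y0 = 1 \<longrightarrow> sig Y0 \<noteq> 0 \<longrightarrow> sig X0 * sig Y0 > 0))" for X0 Y0
    proof -
      have "\<forall>M. mdet M > 0 \<longrightarrow> \<not> (\<forall>z. cmod z < 1 \<longrightarrow> mob (mconj M Y0) z = mob X0 z)"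
      proof (intro allI impI notI)
        fix M assume M: "mdet M > 0" and eq: "\<forall>z. cmod z < 1 \<longrightarrow> mob (mconj M Y0) z = mob X0 z"
        have "mdet X0 > 0" "mdet Y0 > 0" using that(3,4) by (auto simp: fpf_def)
        from conj_inv[OF M this] eq that(5) show False by blast
      qed
      thus ?thesis using that(1-4) by blast
    qed
    consider "tau Pb \<noteq> tau Pg" | "tau Pb = tau Pg" "tau Pb > 1" | "tau Pb = 1" "tau Pg = 1"
      using t1 by linarith
    thus ?thesis
    proof cases
      case 1
      show ?thesis by (rule gen[of Pb Pg]) (use 1 Pb Pg in auto)
    next
      case 2
      have dX: "mdet (mmul Pb Pb) > 0" using dPb by (simp add: mdet_mmul)
      have tX: "tau (mmul Pb Pb) = (2 * tau Pb - 1)^2" using tau_sq[OF dPb] .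
      have gt: "(2 * tau Pb - 1)^2 > tau Pb"
      proof -
        have "(2 * tau Pb - 1)^2 - tau Pb = (4 * tau Pb - 1) * (tau Pb - 1)" by (simp add: power2_eq_square algebra_simps)
        moreover have "(4 * tau Pb - 1) * (tau Pb - 1) > 0" using 2 by simp
        ultimately show ?thesis by linarith
      qed
      have fX: "fpf (mmul Pb Pb)" using tau_gt_fpf[OF dX] tX gt 2 by simp
      show ?thesis by (rule gen[of "mmul Pb Pb" Pg]) (use 2 fX Pg tX gt in auto)
    next
      case 3
      have sb: "sig Pb \<noteq> 0" using fpf_sig[OF Pb 3(1)] .
      have sg: "sig Pg \<noteq> 0" using fpf_sig[OF Pg 3(2)] .
      show ?thesis
      proof (cases "sig Pb * sig Pg > 0")
        case False
        show ?thesis by (rule gen[of Pb Pg]) (use False 3 Pb Pg sg in auto)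
      next
        case True
        have "\<not> sig Pb * sig (madj Pg) > 0" using True unfolding sig_madj by (simp add: mult_less_0_iff zero_less_mult_iff) linarith
        moreover have "sig (madj Pg) \<noteq> 0" using sg by (simp add: sig_madj)
        ultimately show ?thesis by (intro gen[of Pb "madj Pg"]) (use 3 Pb fpf_madj[OF Pg] in \<open>auto simp: tau_madj\<close>)
      qed
    qed
  qed
  then obtain X Y where XY: "X = Pb \<or> X = mmul Pb Pb" "Y = Pg \<or> Y = madj Pg" "fpf X" "fpf Y"
     and ncj: "\<And>M. mdet M > 0 \<Longrightarrow> \<not> (\<forall>z. cmod z < 1 \<longrightarrow> mob (mconj M Y) z = mob X z)" by blast
  have dX: "mdet X > 0" and dY: "mdet Y > 0" using XY by (auto simp: fpf_def)
  obtain a s where as: "cmod a < 1" "cmod s < 1" "disp X a = disp Y s"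
    using disp_match[OF dX fpf_snd[OF XY(3)] dY fpf_snd[OF XY(4)]] by blast
  define a' where "a' = mob X a"
  define s' where "s' = mob Y s"
  have a'1: "cmod a' < 1" using mob_in_disc[OF dX as(1)] by (simp add: a'_def)
  have s'1: "cmod s' < 1" using mob_in_disc[OF dY as(2)] by (simp add: s'_def)
  have ne: "a \<noteq> a'" using XY(3) as(1) by (auto simp: fpf_def a'_def)
  obtain M where M: "mdet M > 0" "mob M a = s" "mob M a' = s'"
    using two_point[OF as(1) a'1 as(2) s'1 ne] as(3) by (auto simp: disp_def a'_def s'_def)
  have main: "dm X a * dm M a' \<noteq> dm Y s * dm M a"
  proof
    assume deq: "dm X a * dm M a' = dm Y s * dm M a"
    define R where "R = mmul (madj X) (mconj M Y)"
    have dC: "mdet (mconj M Y) > 0" using M dY by (simp add: mdet_mconj)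
    have dYM: "mdet (mmul Y M) > 0" using M dY by (simp add: mdet_mmul)
    have dR: "mdet R > 0" using dX dC by (simp add: R_def mdet_mmul)
    have mC: "mob (mconj M Y) z = mob (madj M) (mob Y (mob M z))" if "cmod z < 1" for z
    proof -
      have "mob (mconj M Y) z = mob (madj M) (mob (mmul Y M) z)"
        unfolding mconj_def by (rule mob_mmul) (use M dYM that in auto)
      also have "mob (mmul Y M) z = mob Y (mob M z)" by (rule mob_mmul) (use M dY that in auto)
      finally show ?thesis .
    qed
    have Ca: "mob (mconj M Y) a = a'" using mC[OF as(1)] M mob_madj[OF M(1) a'1] by (simp add: s'_def)
    have Ra: "mob R a = a"
    proof -
      have "mob R a = mob (madj X) (mob (mconj M Y) a)"
        unfolding R_def by (rule mob_mmul) (use dX dC as in auto)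
      thus ?thesis using Ca mob_madj[OF dX as(1)] by (simp add: a'_def)
    qed
    have dmR: "dm R a = 1"
    proof -
      have "dm R a = dm (madj X) (mob (mconj M Y) a) * dm (mconj M Y) a"
        unfolding R_def by (rule dm_mmul) (use dX dC as in auto)
      also have "dm (mconj M Y) a = dm (madj M) (mob (mmul Y M) a) * dm (mmul Y M) a"
        unfolding mconj_def by (rule dm_mmul) (use M dYM as in auto)
      also have "mob (mmul Y M) a = s'" using mob_mmul[OF dY M(1) as(1)] M by (simp add: s'_def)
      also have "dm (mmul Y M) a = dm Y s * dm M a" using dm_mmul[OF dY M(1) as(1)] M by simp
      finally have e: "dm R a = dm (madj X) a' * (dm (madj M) s' * (dm Y s * dm M a))" using Ca by simp
      have i1: "dm (madj X) a' * dm X a = 1" using dm_inv[OF dX as(1)] by (simp add: a'_def)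
      have i2: "dm (madj M) s' * dm M a' = 1" using dm_inv[OF M(1) a'1] M by simp
      have "dm R a = dm (madj X) a' * dm (madj M) s' * (dm X a * dm M a')" unfolding e deq by (simp add: algebra_simps)
      also have "\<dots> = (dm (madj X) a' * dm X a) * (dm (madj M) s' * dm M a')" by (simp add: algebra_simps)
      finally show ?thesis using i1 i2 by simp
    qed
    have Rs: "snd R = 0 \<and> Im (fst R) = 0" using fp_deriv[OF dR as(1) Ra dmR] .
    have Rid: "mob R z = z" for z
    proof -
      have "fst R \<noteq> 0" using dR Rs by (auto simp: mdet_def)
      moreover have "cnj (fst R) = fst R" using Rs by (simp add: complex_eq_iff)
      ultimately show ?thesis using Rs by (simp add: mob_def)
    qed
    have "\<forall>z. cmod z < 1 \<longrightarrow> mob (mconj M Y) z = mob X z"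
    proof (intro allI impI)
      fix z assume z: "cmod z < 1"
      have Cz: "cmod (mob (mconj M Y) z) < 1" using mob_in_disc[OF dC z] .
      have "mob R z = mob (madj X) (mob (mconj M Y) z)"
        unfolding R_def by (rule mob_mmul) (use dX dC z in auto)
      hence "mob X (mob R z) = mob (mconj M Y) z" using mob_madj'[OF dX Cz] by simp
      thus "mob (mconj M Y) z = mob X z" using Rid by simp
    qed
    thus False using ncj[OF M(1)] by blast
  qed
  show ?thesis
    apply (rule exI[of _ X], rule exI[of _ Y], rule exI[of _ M], rule exI[of _ a])
    using XY M as ne main by (simp add: a'_def s'_def)
qed

lemma disc_sc: "simply_connected (ball (0::complex) 1)" by (simp add: convex_imp_simply_connected)
lemma disc_lpc: "locally path_connected (ball (0::complex) 1)" by (simp add: convex_imp_locally_path_connected)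

lemma hlift:
  fixes p f :: "complex \<Rightarrow> complex"
  assumes cov: "covering_space (ball 0 1) p D" and hp: "p holomorphic_on ball 0 1"
    and hf: "f holomorphic_on ball 0 1" and fim: "f \<in> ball 0 1 \<rightarrow> D"
    and w0: "cmod w0 < 1" and f0: "f 0 = p w0"
  shows "\<exists>g. g holomorphic_on ball 0 1 \<and> g \<in> ball 0 1 \<rightarrow> ball 0 1 \<and> g 0 = w0 \<and> (\<forall>y\<in>ball 0 1. p (g y) = f y)"
proof -
  obtain g where g: "continuous_on (ball 0 1) g" "g \<in> ball 0 1 \<rightarrow> ball 0 1" "g 0 = w0"
      "\<And>y. y \<in> ball 0 1 \<Longrightarrow> p (g y) = f y"
    using covering_space_lift_strong[OF cov _ _ disc_sc disc_lpc holomorphic_on_imp_continuous_on[OF hf] fim, of w0 0]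
      w0 f0 by auto
  have "g holomorphic_on ball 0 1"
    by (rule covering_space_lift_is_holomorphic[OF cov open_ball hp hf fim g(2,1)]) (use g(4) in auto)
  thus ?thesis using g by blast
qed

lemma lift_unique:
  fixes p g1 g2 :: "complex \<Rightarrow> complex"
  assumes cov: "covering_space (ball 0 1) p D"
    and c1: "continuous_on (ball 0 1) g1" "g1 \<in> ball 0 1 \<rightarrow> ball 0 1"
    and c2: "continuous_on (ball 0 1) g2" "g2 \<in> ball 0 1 \<rightarrow> ball 0 1"
    and eq: "\<And>y. y \<in> ball 0 1 \<Longrightarrow> p (g1 y) = p (g2 y)"
    and cp: "continuous_on (ball 0 1) (\<lambda>y. p (g1 y))" and pim: "(\<lambda>y. p (g1 y)) \<in> ball 0 1 \<rightarrow> D"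
    and a: "cmod a < 1" "g1 a = g2 a" and x: "cmod x < 1"
  shows "g1 x = g2 x"
  by (rule covering_space_lift_unique[of "ball 0 1" p D g1 a g2 "ball 0 1" "\<lambda>y. p (g1 y)" x])
     (use eq a x cov c1 c2 cp pim in auto)

lemma lift_unique2:
  fixes p g1 g2 :: "complex \<Rightarrow> complex"
  assumes cov: "covering_space (ball 0 1) p D"
    and cp: "continuous_on (ball 0 1) p" and pim: "p \<in> ball 0 1 \<rightarrow> D"
    and c1: "continuous_on (ball 0 1) g1" and c1': "g1 \<in> ball 0 1 \<rightarrow> ball 0 1"
    and c2: "continuous_on (ball 0 1) g2" and c2': "g2 \<in> ball 0 1 \<rightarrow> ball 0 1"
    and eq1: "\<And>y. y \<in> ball 0 1 \<Longrightarrow> p (g1 y) = p y"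
    and eq2: "\<And>y. y \<in> ball 0 1 \<Longrightarrow> p (g2 y) = p y"
    and a: "cmod a < 1" "g1 a = g2 a" and x: "cmod x < 1"
  shows "g1 x = g2 x"
  by (rule covering_space_lift_unique[of "ball 0 1" p D g1 a g2 "ball 0 1" p x])
     (use eq1 eq2 a x cov c1 c2 c1' c2' cp pim in auto)

lemma disc_aut:
  assumes hb: "b holomorphic_on ball 0 1" and bim: "b \<in> ball 0 1 \<rightarrow> ball 0 1"
    and hc: "c holomorphic_on ball 0 1" and cim: "c \<in> ball 0 1 \<rightarrow> ball 0 1"
    and cb: "\<And>z. cmod z < 1 \<Longrightarrow> c (b z) = z"
  shows "\<exists>P. mdet P > 0 \<and> (\<forall>z. cmod z < 1 \<longrightarrow> b z = mob P z)"
proof -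
  define c0 where "c0 = b 0"
  have c01: "cmod c0 < 1" using bim by (auto simp: c0_def)
  have T: "mdet (Ta c0) > 0" "mdet (madj (Ta c0)) > 0" using mdet_Ta_pos[OF c01] by auto
  define h where "h z = mob (madj (Ta c0)) (b z)" for z
  define k where "k z = c (mob (Ta c0) z)" for z
  have bz: "cmod (b z) < 1" if "cmod z < 1" for z using bim that by auto
  have hh: "h holomorphic_on ball 0 1"
    unfolding h_def by (rule holomorphic_on_compose_gen[OF hb mob_holo[OF T(2)], unfolded o_def]) (use bim in auto)
  have h0: "h 0 = 0" by (simp add: h_def c0_def[symmetric] mob_madjTa)
  have hn: "cmod (h z) < 1" if "cmod z < 1" for z using mob_in_disc[OF T(2) bz[OF that]] by (simp add: h_def)
  have hk: "k holomorphic_on ball 0 1"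
    unfolding k_def
    by (rule holomorphic_on_compose_gen[OF mob_holo[OF T(1)] hc, unfolded o_def]) (use mob_in_disc[OF T(1)] in auto)
  have k0: "k 0 = 0" using cb[of 0] by (simp add: k_def mob_Ta0 c0_def)
  have kn: "cmod (k z) < 1" if "cmod z < 1" for z using cim mob_in_disc[OF T(1) that] by (auto simp: k_def)
  have kh: "k (h z) = z" if "cmod z < 1" for z
    using cb[OF that] mob_madj'[OF T(1) bz[OF that]] by (simp add: k_def h_def)
  have eqn: "cmod (h z) = cmod z" if "cmod z < 1" for z
  proof -
    have "cmod (h z) \<le> cmod z" using Schwarz_Lemma(1)[OF hh h0 hn that] .
    moreover have "cmod (k (h z)) \<le> cmod (h z)" using Schwarz_Lemma(1)[OF hk k0 kn hn[OF that]] .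
    ultimately show ?thesis using kh[OF that] by simp
  qed
  have ex: "\<exists>z. cmod z < 1 \<and> z \<noteq> 0 \<and> cmod (h z) = cmod z"
    using eqn[of "1/2"] by (intro exI[of _ "1/2"]) simp
  have "\<exists>\<alpha>. (\<forall>z. cmod z < 1 \<longrightarrow> h z = \<alpha> * z) \<and> cmod \<alpha> = 1"
    using Schwarz_Lemma(3)[OF hh h0 hn, of 0] ex by simp
  then obtain \<alpha> where al: "\<And>z. cmod z < 1 \<Longrightarrow> h z = \<alpha> * z" "cmod \<alpha> = 1" by blast
  define \<mu> where "\<mu> = csqrt \<alpha>"
  have nmu: "cmod \<mu> = 1" using al(2) by (simp add: \<mu>_def)
  have mumu: "\<mu> * cnj \<mu> = 1" using nmu cmod_sq_eq[of \<mu>] by simp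
  define Rot where "Rot = (\<mu>, 0::complex)"
  have Rd: "mdet Rot > 0" using nmu by (simp add: mdet_def Rot_def)
  have Rw: "mob Rot w = \<alpha> * w" for w
  proof -
    have cm: "cnj \<mu> \<noteq> 0" using nmu by auto
    have "mob Rot w = \<mu> * w / cnj \<mu>" by (simp add: mob_def Rot_def)
    also have "\<dots> = \<mu>^2 * w" using mumu cm by (simp add: field_simps power2_eq_square)
    finally show ?thesis by (simp add: \<mu>_def)
  qed
  define P where "P = mmul (Ta c0) Rot"
  have Pd: "mdet P > 0" using T Rd by (simp add: P_def mdet_mmul)
  have "b z = mob P z" if "cmod z < 1" for z
  proof -
    have "b z = mob (Ta c0) (h z)" using mob_madj'[OF T(1) bz[OF that]] by (simp add: h_def)
    also have "\<dots> = mob (Ta c0) (mob Rot z)" using al(1)[OF that] Rw by simp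
    also have "\<dots> = mob P z" unfolding P_def by (rule mob_mmul[symmetric]) (use T Rd that in auto)
    finally show ?thesis .
  qed
  thus ?thesis using Pd by blast
qed

lemma deck_exists:
  assumes cov: "covering_space (ball 0 1) p D" and hp: "p holomorphic_on ball 0 1"
    and u: "cmod u < 1" and v: "cmod v < 1" and uv: "u \<noteq> v" "p u = p v"
  shows "\<exists>P. fpf P \<and> (\<forall>w. cmod w < 1 \<longrightarrow> p (mob P w) = p w)"
proof -
  have pim: "p \<in> ball 0 1 \<rightarrow> D" using covering_space_imp_surjective[OF cov] by blast
  have cp: "continuous_on (ball 0 1) p" using covering_space_imp_continuous[OF cov] .
  have mk: "\<exists>b. b holomorphic_on ball 0 1 \<and> b \<in> ball 0 1 \<rightarrow> ball 0 1 \<and> b x = y \<and> (\<forall>w\<in>ball 0 1. p (b w) = p w)"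
    if x: "cmod x < 1" and y: "cmod y < 1" and xy: "p x = p y" for x y
  proof -
    have T: "mdet (Ta x) > 0" "mdet (madj (Ta x)) > 0" using mdet_Ta_pos[OF x] by auto
    have hf: "(\<lambda>z. p (mob (Ta x) z)) holomorphic_on ball 0 1"
      by (rule holomorphic_on_compose_gen[OF mob_holo[OF T(1)] hp, unfolded o_def]) (use mob_in_disc[OF T(1)] in auto)
    have fim: "(\<lambda>z. p (mob (Ta x) z)) \<in> ball 0 1 \<rightarrow> D" using pim mob_in_disc[OF T(1)] by auto
    obtain g where g: "g holomorphic_on ball 0 1" "g \<in> ball 0 1 \<rightarrow> ball 0 1" "g 0 = y"
        "\<forall>z\<in>ball 0 1. p (g z) = p (mob (Ta x) z)"
      using hlift[OF cov hp hf fim y] xy by (auto simp: mob_Ta0)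
    define b where "b w = g (mob (madj (Ta x)) w)" for w
    have hb: "b holomorphic_on ball 0 1"
      unfolding b_def by (rule holomorphic_on_compose_gen[OF mob_holo[OF T(2)] g(1), unfolded o_def]) (use mob_in_disc[OF T(2)] in auto)
    have bim: "b \<in> ball 0 1 \<rightarrow> ball 0 1" using g(2) mob_in_disc[OF T(2)] by (auto simp: b_def)
    have bx: "b x = y" using g(3) by (simp add: b_def mob_madjTa)
    have pb: "p (b w) = p w" if "w \<in> ball 0 1" for w
      using g(4) mob_in_disc[OF T(2)] mob_madj'[OF T(1)] that by (simp add: b_def)
    show ?thesis using hb bim bx pb by blast
  qed
  obtain b where b: "b holomorphic_on ball 0 1" "b \<in> ball 0 1 \<rightarrow> ball 0 1" "b u = v" "\<forall>w\<in>ball 0 1. p (b w) = p w"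
    using mk[OF u v uv(2)] by blast
  obtain c where c: "c holomorphic_on ball 0 1" "c \<in> ball 0 1 \<rightarrow> ball 0 1" "c v = u" "\<forall>w\<in>ball 0 1. p (c w) = p w"
    using mk[OF v u uv(2)[symmetric]] by blast
  have contb: "continuous_on (ball 0 1) b" using b(1) holomorphic_on_imp_continuous_on by blast
  have contc: "continuous_on (ball 0 1) c" using c(1) holomorphic_on_imp_continuous_on by blast
  have bsub: "b ` ball 0 1 \<subseteq> ball 0 1" using b(2) by blast
  have csub: "c ` ball 0 1 \<subseteq> ball 0 1" using c(2) by blast
  have idf: "(\<lambda>z. z) \<in> ball 0 1 \<rightarrow> ball (0::complex) 1" by simp
  have eqid: "\<And>y. y \<in> ball 0 1 \<Longrightarrow> p y = p y" by simp
  have bf: "b y \<in> ball 0 1" if "y \<in> ball 0 1" for y using b(2) that by blast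
  have cf: "c y \<in> ball 0 1" if "y \<in> ball 0 1" for y using c(2) that by blast
  have cbf: "(\<lambda>z. c (b z)) \<in> ball 0 1 \<rightarrow> ball 0 1" using bf cf by blast
  have bcf: "(\<lambda>z. b (c z)) \<in> ball 0 1 \<rightarrow> ball 0 1" using bf cf by blast
  have eqcb: "p (c (b y)) = p y" if "y \<in> ball 0 1" for y using b(4) c(4) bf[OF that] that by simp
  have eqbc: "p (b (c y)) = p y" if "y \<in> ball 0 1" for y using b(4) c(4) cf[OF that] that by simp
  have cb: "c (b z) = z" if "cmod z < 1" for z
    using lift_unique2[OF cov cp pim continuous_on_compose2[OF contc contb bsub] cbf continuous_on_id idf eqcb eqid u _ that]
      b(3) c(3) by simp
  have bc: "b (c z) = z" if "cmod z < 1" for z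
    using lift_unique2[OF cov cp pim continuous_on_compose2[OF contb contc csub] bcf continuous_on_id idf eqbc eqid v _ that]
      b(3) c(3) by simp
  obtain P where P: "mdet P > 0" "\<And>z. cmod z < 1 \<Longrightarrow> b z = mob P z"
    using disc_aut[OF b(1,2) c(1,2) cb] by blast
  have "fpf P"
    unfolding fpf_def
  proof (intro conjI allI impI)
    show "mdet P > 0" by (rule P(1))
    fix w :: complex assume w: "cmod w < 1"
    show "mob P w \<noteq> w"
    proof
      assume "mob P w = w"
      hence bw: "b w = w" using P(2)[OF w] by simp
      have "b u = u"
        using lift_unique2[OF cov cp pim contb b(2) continuous_on_id idf _ eqid w bw u] b(4) by simp
      thus False using b(3) uv(1) by simp
    qed
  qed
  moreover have "\<forall>w. cmod w < 1 \<longrightarrow> p (mob P w) = p w" using b(4) P(2) by auto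
  ultimately show ?thesis by blast
qed

lemma hol_deriv: "f holomorphic_on ball 0 1 \<Longrightarrow> cmod w < 1 \<Longrightarrow> (f has_field_derivative deriv f w) (at w)"
  using holomorphic_derivI[of f "ball 0 1" w UNIV] by simp

lemma cov_deriv_nz:
  fixes p :: "complex \<Rightarrow> complex"
  assumes cov: "covering_space (ball 0 1) p D" and hp: "p holomorphic_on ball 0 1" and w: "cmod w < 1"
  shows "deriv p w \<noteq> 0"
proof -
  obtain T U q where T: "w \<in> T" "openin (top_of_set (ball 0 1)) T" "homeomorphism T U p q"
    using covering_space_local_homeomorphism[OF cov, of w] w by (metis mem_ball_0)
  have oT: "open T" using T(2) openin_open_trans open_ball by blast
  have sT: "T \<subseteq> ball 0 1" using T(2) openin_imp_subset by blast
  have inj: "inj_on p T" using T(3) by (metis homeomorphism_def inj_on_inverseI)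
  show ?thesis
    by (rule holomorphic_injective_imp_regular[OF holomorphic_on_subset[OF hp sT] oT inj T(1)])
qed

lemma deck_deriv:
  assumes hp: "p holomorphic_on ball 0 1" and P: "mdet P > 0"
    and deck: "\<And>w. cmod w < 1 \<Longrightarrow> p (mob P w) = p w" and w: "cmod w < 1"
  shows "deriv p (mob P w) * dm P w = deriv p w"
proof -
  have m: "cmod (mob P w) < 1" using mob_in_disc[OF P w] .
  have "(p \<circ> mob P has_field_derivative deriv p (mob P w) * dm P w) (at w)"
    by (rule DERIV_chain[OF hol_deriv[OF hp m] mob_deriv[OF mden_nz[OF P w]]])
  hence "(p has_field_derivative deriv p (mob P w) * dm P w) (at w)"
    by (rule has_field_derivative_transform_within_open[of _ _ _ "ball 0 1"]) (use w deck in auto)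
  thus ?thesis using hol_deriv[OF hp w] DERIV_unique by blast
qed

lemma schwarz_est:
  assumes hg: "g holomorphic_on ball 0 1" and gn: "\<And>z. cmod z < 1 \<Longrightarrow> cmod (g z) < 1" and g0: "g 0 = 0"
    and r: "0 \<le> r" "r < 1" and z: "cmod \<zeta> \<le> r"
  shows "cmod (g \<zeta> - deriv g 0 * \<zeta>) \<le> (1 - (cmod (deriv g 0))^2) / (1 - r)"
proof -
  define c where "c = deriv g 0"
  have z1: "cmod \<zeta> < 1" using z r by simp
  have K: "c = \<alpha>" if "\<And>z. cmod z < 1 \<Longrightarrow> g z = \<alpha> * z" for \<alpha>
  proof -
    have "((\<lambda>z. \<alpha> * z) has_field_derivative \<alpha>) (at 0)" by (auto intro!: derivative_eq_intros)
    hence "(g has_field_derivative \<alpha>) (at 0)"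
      by (rule has_field_derivative_transform_within_open[of _ _ _ "ball 0 1"]) (use that in auto)
    thus ?thesis unfolding c_def by (rule DERIV_imp_deriv)
  qed
  have c1: "cmod c \<le> 1" using Schwarz_Lemma(2)[OF hg g0 gn z1] by (simp add: c_def)
  show ?thesis
  proof (cases "(\<exists>z. cmod z < 1 \<and> z \<noteq> 0 \<and> cmod (g z) = cmod z) \<or> cmod c = 1")
    case True
    then obtain \<alpha> where al: "\<And>z. cmod z < 1 \<Longrightarrow> g z = \<alpha> * z" "cmod \<alpha> = 1"
      using Schwarz_Lemma(3)[OF hg g0 gn z1] by (auto simp: c_def)
    have "c = \<alpha>" using K al(1) by blast
    hence "g \<zeta> - c * \<zeta> = 0" using al(1)[OF z1] by simp
    moreover have "1 - (cmod c)^2 = 0" using \<open>c = \<alpha>\<close> al(2) by simp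
    ultimately show ?thesis by (simp add: c_def)
  next
    case False
    hence cl: "cmod c < 1" using c1 by auto
    obtain h where hh: "h holomorphic_on ball 0 1" and gh: "\<And>z. cmod z < 1 \<Longrightarrow> g z = z * h z" and h0: "deriv g 0 = h 0"
      using Schwarz3[OF hg] g0 by metis
    have hn: "cmod (h z) < 1" if "cmod z < 1" for z
    proof (cases "z = 0")
      case True thus ?thesis using cl h0 by (simp add: c_def)
    next
      case nz: False
      have "cmod (g z) \<le> cmod z" using Schwarz_Lemma(1)[OF hg g0 gn that] .
      moreover have "cmod (g z) \<noteq> cmod z" using False that nz by blast
      ultimately have "cmod z * cmod (h z) < cmod z" using gh[OF that] by (simp add: norm_mult)
      thus ?thesis using nz by simp
    qed
    have Tc: "mdet (madj (Ta c)) > 0" using mdet_Ta_pos[OF cl] by simp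
    define \<phi> where "\<phi> z = mob (madj (Ta c)) (h z)" for z
    have hphi: "\<phi> holomorphic_on ball 0 1"
      unfolding \<phi>_def by (rule holomorphic_on_compose_gen[OF hh mob_holo[OF Tc], unfolded o_def]) (use hn in auto)
    have phi0: "\<phi> 0 = 0" using h0 by (simp add: \<phi>_def c_def[symmetric] mob_madjTa)
    have phin: "cmod (\<phi> z) < 1" if "cmod z < 1" for z using mob_in_disc[OF Tc hn[OF that]] by (simp add: \<phi>_def)
    have ph: "cmod (\<phi> \<zeta>) \<le> r" using Schwarz_Lemma(1)[OF hphi phi0 phin z1] z by simp
    define q where "q = h \<zeta>"
    have dq: "1 - cnj c * q \<noteq> 0"
    proof
      assume "1 - cnj c * q = 0"
      hence "cmod (cnj c * q) = 1" by (metis eq_iff_diff_eq_0 norm_one)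
      moreover have "cmod q < 1" using hn[OF z1] by (simp add: q_def)
      moreover have "cmod c * cmod q \<le> cmod q" using cl by (simp add: mult_left_le_one_le)
      ultimately show False by (simp add: norm_mult)
    qed
    have e1: "cmod (q - c) = cmod (\<phi> \<zeta>) * cmod (1 - cnj c * q)"
      using dq by (simp add: \<phi>_def mob_madjTa_eq q_def[symmetric] norm_divide)
    have e2: "cmod (1 - cnj c * q) \<le> (1 - (cmod c)^2) + cmod c * cmod (q - c)"
    proof -
      have "1 - cnj c * q = (1 - cnj c * c) - cnj c * (q - c)" by (simp add: algebra_simps)
      also have "1 - cnj c * c = of_real (1 - (cmod c)^2)" using cmod_sq_eq[of c] by (simp add: mult.commute)
      finally have "cmod (1 - cnj c * q) \<le> cmod (complex_of_real (1 - (cmod c)^2)) + cmod (cnj c * (q - c))"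
        by (metis norm_triangle_ineq4)
      moreover have "cmod (complex_of_real (1 - (cmod c)^2)) = \<bar>1 - (cmod c)^2\<bar>" by (rule norm_of_real)
      moreover have "\<bar>1 - (cmod c)^2\<bar> = 1 - (cmod c)^2" using c1 by (simp add: power_le_one)
      ultimately show ?thesis by (simp add: norm_mult)
    qed
    have "cmod (q - c) \<le> r * ((1 - (cmod c)^2) + cmod c * cmod (q - c))"
      using e1 e2 ph by (smt (verit) mult_mono norm_ge_zero)
    hence "cmod (q - c) * (1 - r * cmod c) \<le> r * (1 - (cmod c)^2)" by (simp add: algebra_simps)
    moreover have "cmod (q - c) * (1 - r) \<le> cmod (q - c) * (1 - r * cmod c)"
      using c1 r by (intro mult_left_mono) (auto simp: mult_left_le mult_le_one)
    moreover have "r * (1 - (cmod c)^2) \<le> 1 - (cmod c)^2" using r c1 by (simp add: mult_left_le_one_le abs_square_le_1)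
    ultimately have "cmod (q - c) * (1 - r) \<le> 1 - (cmod c)^2" by linarith
    hence qc: "cmod (q - c) \<le> (1 - (cmod c)^2) / (1 - r)" using r by (simp add: field_simps)
    have "g \<zeta> - c * \<zeta> = \<zeta> * (q - c)" using gh[OF z1] by (simp add: q_def algebra_simps)
    hence "cmod (g \<zeta> - c * \<zeta>) = cmod \<zeta> * cmod (q - c)" by (simp add: norm_mult)
    also have "\<dots> \<le> cmod (q - c)" using z1 by (simp add: mult_left_le_one_le)
    finally show ?thesis using qc by (simp add: c_def)
  qed
qed

definition F0 :: "(complex \<Rightarrow> complex) \<Rightarrow> (complex \<Rightarrow> complex) \<Rightarrow> complex \<times> complex \<Rightarrow> complex \<times> complex" where
  "F0 q1 q2 w = (q1 (snd w) - q1 (fst w), q2 (snd w) - q2 (fst w))"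

lemma norm_pair_bounds: "cmod (fst w) \<le> norm w" "cmod (snd w) \<le> norm w"
  using norm_fst_le[of "fst w" "snd w"] norm_snd_le[of "snd w" "fst w"] by auto

lemma stab:
  fixes q1 q2 :: "complex \<Rightarrow> complex" and b :: complex
  assumes hq1: "q1 holomorphic_on ball 0 1" and hq2: "q2 holomorphic_on ball 0 1"
    and b: "cmod b < 1" "b \<noteq> 0" and dp: "q1 b = q1 0" "q2 b = q2 0"
    and tr: "deriv q1 0 * deriv q2 b \<noteq> deriv q1 b * deriv q2 0"
  shows "\<exists>\<rho>>0. \<exists>\<eta>>0. \<rho> \<le> (1 - cmod b) / 4 \<and> \<rho> \<le> cmod b / 4 \<and>
     (\<forall>F. continuous_on (cball (0,b) \<rho>) F \<and> (\<forall>w\<in>cball (0,b) \<rho>. norm (F w - F0 q1 q2 w) \<le> \<eta>)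
        \<longrightarrow> (\<exists>w\<in>cball (0,b) \<rho>. F w = 0))"
proof -
  define a where "a = deriv q1 b"
  define c where "c = deriv q1 0"
  define d where "d = deriv q2 b"
  define e where "e = deriv q2 0"
  define \<Delta> where "\<Delta> = a * e - c * d"
  have D0: "\<Delta> \<noteq> 0" using tr by (simp add: \<Delta>_def a_def c_def d_def e_def mult.commute)
  define L where "L h = (a * snd h - c * fst h, d * snd h - e * fst h)" for h :: "complex \<times> complex"
  define Li where "Li v = ((d * fst v - a * snd v) / \<Delta>, (e * fst v - c * snd v) / \<Delta>)" for v :: "complex \<times> complex"
  define K where "K = (cmod a + cmod c + cmod d + cmod e) / cmod \<Delta> + 1"
  have "(cmod a + cmod c + cmod d + cmod e) / cmod \<Delta> \<ge> 0" by simp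
  hence K0: "K > 0" unfolding K_def by linarith
  have LLi: "L (Li v) = v" for v
  proof -
    have 1: "a * ((e * fst v - c * snd v) / \<Delta>) - c * ((d * fst v - a * snd v) / \<Delta>) =
        (a * (e * fst v - c * snd v) - c * (d * fst v - a * snd v)) / \<Delta>" using D0 by (simp add: field_simps)
    have 2: "a * (e * fst v - c * snd v) - c * (d * fst v - a * snd v) = fst v * \<Delta>" by (simp add: \<Delta>_def algebra_simps)
    have 3: "d * ((e * fst v - c * snd v) / \<Delta>) - e * ((d * fst v - a * snd v) / \<Delta>) =
        (d * (e * fst v - c * snd v) - e * (d * fst v - a * snd v)) / \<Delta>" using D0 by (simp add: field_simps)
    have 4: "d * (e * fst v - c * snd v) - e * (d * fst v - a * snd v) = snd v * \<Delta>" by (simp add: \<Delta>_def algebra_simps)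
    show ?thesis unfolding L_def Li_def fst_conv snd_conv 1 2 3 4 using D0 by (simp add: prod_eq_iff)
  qed
  have LiL: "Li (L h) = h" for h
  proof -
    have 1: "(d * (a * snd h - c * fst h) - a * (d * snd h - e * fst h)) / \<Delta> = fst h"
    proof -
      have "d * (a * snd h - c * fst h) - a * (d * snd h - e * fst h) = fst h * \<Delta>" by (simp add: \<Delta>_def algebra_simps)
      thus ?thesis using D0 by simp
    qed
    have 2: "(e * (a * snd h - c * fst h) - c * (d * snd h - e * fst h)) / \<Delta> = snd h"
    proof -
      have "e * (a * snd h - c * fst h) - c * (d * snd h - e * fst h) = snd h * \<Delta>" by (simp add: \<Delta>_def algebra_simps)
      thus ?thesis using D0 by simp
    qed
    show ?thesis unfolding L_def Li_def fst_conv snd_conv 1 2 by simp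
  qed
  have Li_diff: "Li (u - v) = Li u - Li v" for u v
    using D0 by (simp add: Li_def prod_eq_iff field_simps)
  have Li_bnd: "norm (Li v) \<le> K * norm v" for v
  proof -
    have "norm (Li v) \<le> cmod ((d * fst v - a * snd v) / \<Delta>) + cmod ((e * fst v - c * snd v) / \<Delta>)"
      unfolding Li_def by (rule norm_Pair_le)
    also have "\<dots> \<le> (cmod d * norm v + cmod a * norm v) / cmod \<Delta> + (cmod e * norm v + cmod c * norm v) / cmod \<Delta>"
    proof -
      have "cmod (d * fst v - a * snd v) \<le> cmod d * norm v + cmod a * norm v"
        using norm_triangle_ineq4[of "d * fst v" "a * snd v"] norm_pair_bounds[of v]
        by (smt (verit) mult_left_mono norm_ge_zero norm_mult)
      moreover have "cmod (e * fst v - c * snd v) \<le> cmod e * norm v + cmod c * norm v"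
        using norm_triangle_ineq4[of "e * fst v" "c * snd v"] norm_pair_bounds[of v]
        by (smt (verit) mult_left_mono norm_ge_zero norm_mult)
      ultimately show ?thesis using D0 by (simp add: norm_divide divide_right_mono add_mono)
    qed
    also have "\<dots> = ((cmod a + cmod c + cmod d + cmod e) / cmod \<Delta>) * norm v"
      by (simp add: add_divide_distrib[symmetric] algebra_simps)
    also have "\<dots> \<le> K * norm v" unfolding K_def by (intro mult_right_mono) auto
    finally show ?thesis .
  qed
  have contLi: "continuous_on UNIV Li" unfolding Li_def by (intro continuous_intros) (use D0 in auto)
  have b1: "cmod b < 1" using b by simp
  have der: "(F0 q1 q2 has_derivative L) (at (0,b))"
  proof -
    have sd: "((\<lambda>w::complex\<times>complex. snd w) has_derivative (\<lambda>h. snd h)) (at (0,b))"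
      by (intro derivative_intros)
    have fd: "((\<lambda>w::complex\<times>complex. fst w) has_derivative (\<lambda>h. fst h)) (at (0,b))"
      by (intro derivative_intros)
    have q1b: "(q1 has_derivative (*) a) (at (snd (0::complex,b)))"
      using has_field_derivative_imp_has_derivative[OF hol_deriv[OF hq1 b1]] by (simp add: a_def)
    have q10: "(q1 has_derivative (*) c) (at (fst (0::complex,b)))"
      using has_field_derivative_imp_has_derivative[OF hol_deriv[OF hq1, of 0]] by (simp add: c_def)
    have q2b: "(q2 has_derivative (*) d) (at (snd (0::complex,b)))"
      using has_field_derivative_imp_has_derivative[OF hol_deriv[OF hq2 b1]] by (simp add: d_def)
    have q20: "(q2 has_derivative (*) e) (at (fst (0::complex,b)))"
      using has_field_derivative_imp_has_derivative[OF hol_deriv[OF hq2, of 0]] by (simp add: e_def)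
    have s: "((\<lambda>w::complex\<times>complex. q1 (snd w)) has_derivative (\<lambda>h. a * snd h)) (at (0,b))"
      using has_derivative_compose[OF sd q1b] by simp
    have f: "((\<lambda>w::complex\<times>complex. q1 (fst w)) has_derivative (\<lambda>h. c * fst h)) (at (0,b))"
      using has_derivative_compose[OF fd q10] by simp
    have s2: "((\<lambda>w::complex\<times>complex. q2 (snd w)) has_derivative (\<lambda>h. d * snd h)) (at (0,b))"
      using has_derivative_compose[OF sd q2b] by simp
    have f2: "((\<lambda>w::complex\<times>complex. q2 (fst w)) has_derivative (\<lambda>h. e * fst h)) (at (0,b))"
      using has_derivative_compose[OF fd q20] by simp
    show ?thesis unfolding F0_def L_def
      by (intro has_derivative_Pair has_derivative_diff s f s2 f2)
  qed
  obtain \<delta> where \<delta>: "\<delta> > 0" "\<And>y. norm (y - (0,b)) < \<delta> \<Longrightarrow>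
      norm (F0 q1 q2 y - F0 q1 q2 (0,b) - L (y - (0,b))) \<le> (1 / (2*K)) * norm (y - (0,b))"
    using der[unfolded has_derivative_at_alt] K0 by (metis divide_pos_pos mult_pos_pos zero_less_numeral zero_less_one)
  have F00: "F0 q1 q2 (0,b) = 0" using dp by (simp add: F0_def zero_prod_def)
  define \<rho> where "\<rho> = min (\<delta>/2) (min ((1 - cmod b) / 4) (cmod b / 4))"
  have \<rho>0: "\<rho> > 0" using \<delta> b by (simp add: \<rho>_def)
  define \<eta> where "\<eta> = \<rho> / (2 * K)"
  have \<eta>0: "\<eta> > 0" using \<rho>0 K0 by (simp add: \<eta>_def)
  have main: "\<exists>w\<in>cball (0,b) \<rho>. F w = 0"
    if cF: "continuous_on (cball (0,b) \<rho>) F" and cl: "\<forall>w\<in>cball (0,b) \<rho>. norm (F w - F0 q1 q2 w) \<le> \<eta>" for F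
  proof -
    define \<Phi> where "\<Phi> w = w - Li (F w)" for w
    have c\<Phi>: "continuous_on (cball (0,b) \<rho>) \<Phi>"
      unfolding \<Phi>_def by (intro continuous_intros cF continuous_on_compose2[OF contLi cF]) auto
    have im: "\<Phi> w \<in> cball (0,b) \<rho>" if w: "w \<in> cball (0,b) \<rho>" for w
    proof -
      have nw: "norm (w - (0,b)) \<le> \<rho>" using w by (simp add: dist_norm norm_minus_commute)
      have "\<Phi> w - (0,b) = Li (L (w - (0,b))) - Li (F w)" by (simp add: \<Phi>_def LiL)
      also have "\<dots> = - Li (F0 q1 q2 w - L (w - (0,b))) - Li (F w - F0 q1 q2 w)"
        by (simp add: Li_diff algebra_simps)
      finally have e: "\<Phi> w - (0,b) = - Li (F0 q1 q2 w - L (w - (0,b))) - Li (F w - F0 q1 q2 w)" .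
      have n1: "norm (F0 q1 q2 w - L (w - (0,b))) \<le> (1 / (2*K)) * \<rho>"
      proof -
        have "norm (w - (0,b)) < \<delta>" using nw \<rho>0 by (simp add: \<rho>_def)
        from \<delta>(2)[OF this] have "norm (F0 q1 q2 w - L (w - (0,b))) \<le> (1 / (2*K)) * norm (w - (0,b))"
          using F00 by simp
        also have "\<dots> \<le> (1 / (2*K)) * \<rho>" using nw K0 by (intro mult_left_mono) auto
        finally show ?thesis .
      qed
      have "norm (\<Phi> w - (0,b)) \<le> norm (Li (F0 q1 q2 w - L (w - (0,b)))) + norm (Li (F w - F0 q1 q2 w))"
        unfolding e by (metis norm_minus_cancel norm_triangle_ineq4)
      also have "\<dots> \<le> K * ((1 / (2*K)) * \<rho>) + K * \<eta>"
        using Li_bnd[of "F0 q1 q2 w - L (w - (0,b))"] Li_bnd[of "F w - F0 q1 q2 w"] n1 cl w K0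
        by (smt (verit) mult_left_mono)
      also have "\<dots> = \<rho>" using K0 by (simp add: \<eta>_def field_simps)
      finally show ?thesis by (simp add: dist_norm norm_minus_commute)
    qed
    obtain w where w: "w \<in> cball (0,b) \<rho>" "\<Phi> w = w"
      using brouwer_ball[OF \<rho>0 c\<Phi>] im by blast
    have "Li (F w) = 0" using w(2) by (simp add: \<Phi>_def)
    hence "F w = 0" using LLi[of "F w"] by (simp add: L_def zero_prod_def)
    thus ?thesis using w(1) by blast
  qed
  show ?thesis
  proof (rule exI[of _ \<rho>], rule conjI[OF \<rho>0], rule exI[of _ \<eta>], intro conjI)
    show "\<rho> \<le> (1 - cmod b) / 4" "\<rho> \<le> cmod b / 4" unfolding \<rho>_def by (simp_all only: min_le_iff_disj) simp_all
  qed (use \<eta>0 main in auto)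
qed

lemma cball_pair:
  assumes "w \<in> cball (0::complex,b) \<rho>"
  shows "cmod (fst w) \<le> \<rho>" "cmod (snd w - b) \<le> \<rho>"
proof -
  have n: "norm ((0,b) - w) \<le> \<rho>" using assms by (simp add: dist_norm)
  show "cmod (fst w) \<le> \<rho>" using norm_pair_bounds(1)[of "(0,b) - w"] n by simp
  show "cmod (snd w - b) \<le> \<rho>" using norm_pair_bounds(2)[of "(0,b) - w"] n by (simp add: norm_minus_commute)
qed

lemma unif_cont_disc:
  fixes q :: "complex \<Rightarrow> complex"
  assumes hq: "q holomorphic_on ball 0 1" and r: "r < 1" and e: "e > 0"
  shows "\<exists>\<delta>>0. \<forall>x y. cmod x \<le> r \<longrightarrow> cmod y \<le> r \<longrightarrow> cmod (x - y) < \<delta> \<longrightarrow> cmod (q x - q y) < e"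
proof -
  have sub: "cball 0 r \<subseteq> ball (0::complex) 1" using r by auto
  have "continuous_on (cball 0 r) q"
    using holomorphic_on_imp_continuous_on[OF holomorphic_on_subset[OF hq sub]] .
  hence "uniformly_continuous_on (cball 0 r) q" by (rule compact_uniformly_continuous) simp
  then obtain \<delta> where "\<delta> > 0" "\<And>x y. x \<in> cball 0 r \<Longrightarrow> y \<in> cball 0 r \<Longrightarrow> dist y x < \<delta> \<Longrightarrow> dist (q y) (q x) < e"
    using e unfolding uniformly_continuous_on_def by metis
  thus ?thesis by (intro exI[of _ \<delta>]) (auto simp: dist_norm)
qed

lemma noninj:
  fixes q1 q2 :: "complex \<Rightarrow> complex" and b :: complex
  assumes hq1: "q1 holomorphic_on ball 0 1" and hq2: "q2 holomorphic_on ball 0 1"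
    and b: "cmod b < 1" "b \<noteq> 0" and dp: "q1 b = q1 0" "q2 b = q2 0"
    and tr: "deriv q1 0 * deriv q2 b \<noteq> deriv q1 b * deriv q2 0"
  shows "\<exists>\<theta>>0. \<forall>g1 g2 c. g1 holomorphic_on ball 0 1 \<longrightarrow> (\<forall>z. cmod z < 1 \<longrightarrow> cmod (g1 z) < 1) \<longrightarrow> g1 0 = 0
     \<longrightarrow> deriv g1 0 = c \<longrightarrow> g2 holomorphic_on ball 0 1 \<longrightarrow> (\<forall>z. cmod z < 1 \<longrightarrow> cmod (g2 z) < 1) \<longrightarrow> g2 0 = 0
     \<longrightarrow> deriv g2 0 = c \<longrightarrow> 1 - \<theta> < cmod c
     \<longrightarrow> (\<exists>\<zeta> \<zeta>'. cmod \<zeta> < 1 \<and> cmod \<zeta>' < 1 \<and> \<zeta> \<noteq> \<zeta>' \<and> q1 (g1 \<zeta>) = q1 (g1 \<zeta>') \<and> q2 (g2 \<zeta>) = q2 (g2 \<zeta>'))"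
proof -
  obtain \<rho> \<eta> where \<rho>: "\<rho> > 0" "\<eta> > 0" "\<rho> \<le> (1 - cmod b) / 4" "\<rho> \<le> cmod b / 4"
    and st: "\<And>F. continuous_on (cball (0::complex,b) \<rho>) F \<Longrightarrow> (\<forall>w\<in>cball (0::complex,b) \<rho>. norm (F w - F0 q1 q2 w) \<le> \<eta>)
        \<Longrightarrow> (\<exists>w\<in>cball (0::complex,b) \<rho>. F w = 0)"
    using stab[OF hq1 hq2 b dp tr] by metis
  define r where "r = (1 + cmod b) / 2"
  have r: "0 \<le> r" "r < 1" using b by (auto simp: r_def)
  have inr: "cmod (fst w) \<le> r" "cmod (snd w) \<le> r" if "w \<in> cball (0::complex,b) \<rho>" for w
  proof -
    show "cmod (fst w) \<le> r" using cball_pair(1)[OF that] \<rho> b by (simp add: r_def)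
    have "cmod (snd w) \<le> cmod (snd w - b) + cmod b" by (metis norm_triangle_sub add.commute)
    thus "cmod (snd w) \<le> r" using cball_pair(2)[OF that] \<rho> b by (simp add: r_def)
  qed
  have e4: "\<eta> / 4 > 0" using \<rho> by simp
  obtain \<delta>1 where \<delta>1: "\<delta>1 > 0" "\<And>x y. cmod x \<le> r \<Longrightarrow> cmod y \<le> r \<Longrightarrow> cmod (x - y) < \<delta>1 \<Longrightarrow> cmod (q1 x - q1 y) < \<eta> / 4"
    using unif_cont_disc[OF hq1 r(2) e4] by blast
  obtain \<delta>2 where \<delta>2: "\<delta>2 > 0" "\<And>x y. cmod x \<le> r \<Longrightarrow> cmod y \<le> r \<Longrightarrow> cmod (x - y) < \<delta>2 \<Longrightarrow> cmod (q2 x - q2 y) < \<eta> / 4"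
    using unif_cont_disc[OF hq2 r(2) e4] by blast
  define \<delta> where "\<delta> = min \<delta>1 \<delta>2"
  have \<delta>0: "\<delta> > 0" using \<delta>1 \<delta>2 by (simp add: \<delta>_def)
  define \<theta> where "\<theta> = min (1/2) (\<delta> * (1 - r) / 4)"
  have \<theta>0: "\<theta> > 0" using \<delta>0 r by (simp add: \<theta>_def)
  have key: "\<exists>\<zeta> \<zeta>'. cmod \<zeta> < 1 \<and> cmod \<zeta>' < 1 \<and> \<zeta> \<noteq> \<zeta>' \<and> q1 (g1 \<zeta>) = q1 (g1 \<zeta>') \<and> q2 (g2 \<zeta>) = q2 (g2 \<zeta>')"
    if g1: "g1 holomorphic_on ball 0 1" "\<forall>z. cmod z < 1 \<longrightarrow> cmod (g1 z) < 1" "g1 0 = 0" "deriv g1 0 = c"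
    and g2: "g2 holomorphic_on ball 0 1" "\<forall>z. cmod z < 1 \<longrightarrow> cmod (g2 z) < 1" "g2 0 = 0" "deriv g2 0 = c"
    and cth: "1 - \<theta> < cmod c" for g1 g2 c
  proof -
    have c1: "cmod c \<le> 1" using Schwarz_Lemma(2)[OF g1(1) g1(3), of 0] g1(2,4) by simp
    have ch: "cmod c > 1/2" using cth by (simp add: \<theta>_def)
    hence c0: "c \<noteq> 0" by auto
    define \<nu> where "\<nu> = cnj c / of_real (cmod c)"
    have nnu: "cmod \<nu> = 1" using c0 by (simp add: \<nu>_def norm_divide)
    have cnu: "c * \<nu> = of_real (cmod c)"
    proof -
      have "c * cnj c = of_real ((cmod c)^2)" by (rule cmod_sq_eq[symmetric])
      thus ?thesis using c0 by (simp add: \<nu>_def power2_eq_square field_simps)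
    qed
    have thb: "1 - cmod c < \<theta>" using cth by simp
    have close: "cmod (g (\<nu> * \<zeta>) - \<zeta>) < \<delta>" "cmod (g (\<nu> * \<zeta>)) \<le> r"
      if g: "g holomorphic_on ball 0 1" "\<forall>z. cmod z < 1 \<longrightarrow> cmod (g z) < 1" "g 0 = 0" "deriv g 0 = c"
      and z: "cmod \<zeta> \<le> r" for g \<zeta>
    proof -
      have nz: "cmod (\<nu> * \<zeta>) \<le> r" using z nnu by (simp add: norm_mult)
      have z1: "cmod (\<nu> * \<zeta>) < 1" using nz r by simp
      have gn: "\<And>z. cmod z < 1 \<Longrightarrow> cmod (g z) < 1" using g(2) by blast
      have est: "cmod (g (\<nu> * \<zeta>) - c * (\<nu> * \<zeta>)) \<le> (1 - (cmod c)^2) / (1 - r)"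
        using schwarz_est[OF g(1) gn g(3) r nz] g(4) by simp
      have e2: "(1 - (cmod c)^2) / (1 - r) \<le> 2 * \<theta> / (1 - r)"
      proof -
        have "1 - (cmod c)^2 = (1 - cmod c) * (1 + cmod c)" by (simp add: power2_eq_square algebra_simps)
        also have "\<dots> \<le> \<theta> * 2" using thb c1 by (intro mult_mono) auto
        finally show ?thesis using r by (simp add: divide_right_mono)
      qed
      have e3: "cmod (c * (\<nu> * \<zeta>) - \<zeta>) \<le> \<theta>"
      proof -
        have "c * (\<nu> * \<zeta>) - \<zeta> = - (of_real (1 - cmod c) * \<zeta>)" using cnu by (simp add: algebra_simps)
        hence "cmod (c * (\<nu> * \<zeta>) - \<zeta>) = \<bar>1 - cmod c\<bar> * cmod \<zeta>"
          by (simp only: norm_minus_cancel norm_mult norm_of_real)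
        hence "cmod (c * (\<nu> * \<zeta>) - \<zeta>) = (1 - cmod c) * cmod \<zeta>" using c1 by simp
        also have "\<dots> \<le> (1 - cmod c) * 1" using z r c1 by (intro mult_left_mono) auto
        finally show ?thesis using thb by simp
      qed
      have "cmod (g (\<nu> * \<zeta>) - \<zeta>) \<le> cmod (g (\<nu> * \<zeta>) - c * (\<nu> * \<zeta>)) + cmod (c * (\<nu> * \<zeta>) - \<zeta>)"
        by (metis diff_add_cancel norm_triangle_ineq add_diff_eq)
      also have "\<dots> \<le> 2 * \<theta> / (1 - r) + \<theta>" using est e2 e3 by linarith
      also have "\<dots> \<le> 3 * \<theta> / (1 - r)"
      proof -
        have "\<theta> \<le> \<theta> / (1 - r)" using \<theta>0 r by (simp add: field_simps)
        moreover have "3 * \<theta> / (1 - r) = 2 * \<theta> / (1 - r) + \<theta> / (1 - r)" by (simp add: add_divide_distrib[symmetric])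
        ultimately show ?thesis by linarith
      qed
      also have "\<dots> \<le> 3 * (\<delta> * (1 - r) / 4) / (1 - r)" using r by (intro divide_right_mono) (auto simp: \<theta>_def)
      also have "\<dots> < \<delta>" using r \<delta>0 by (simp add: field_simps)
      finally show "cmod (g (\<nu> * \<zeta>) - \<zeta>) < \<delta>" .
      show "cmod (g (\<nu> * \<zeta>)) \<le> r" using Schwarz_Lemma(1)[OF g(1) g(3) gn z1] nz by simp
    qed
    define F where "F w = (q1 (g1 (\<nu> * snd w)) - q1 (g1 (\<nu> * fst w)), q2 (g2 (\<nu> * snd w)) - q2 (g2 (\<nu> * fst w)))" for w
    have approx: "\<forall>w\<in>cball (0::complex,b) \<rho>. norm (F w - F0 q1 q2 w) \<le> \<eta>"
    proof
      fix w assume w: "w \<in> cball (0::complex,b) \<rho>"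
      have a1: "cmod (q1 (g1 (\<nu> * z)) - q1 z) < \<eta> / 4" if "cmod z \<le> r" for z
        using \<delta>1(2)[OF close(2)[OF g1 that] that] close(1)[OF g1 that] by (simp add: \<delta>_def)
      have a2: "cmod (q2 (g2 (\<nu> * z)) - q2 z) < \<eta> / 4" if "cmod z \<le> r" for z
        using \<delta>2(2)[OF close(2)[OF g2 that] that] close(1)[OF g2 that] by (simp add: \<delta>_def)
      have "F w - F0 q1 q2 w = ((q1 (g1 (\<nu> * snd w)) - q1 (snd w)) - (q1 (g1 (\<nu> * fst w)) - q1 (fst w)),
            (q2 (g2 (\<nu> * snd w)) - q2 (snd w)) - (q2 (g2 (\<nu> * fst w)) - q2 (fst w)))"
        by (simp add: F_def F0_def algebra_simps)
      hence "norm (F w - F0 q1 q2 w) \<le> cmod ((q1 (g1 (\<nu> * snd w)) - q1 (snd w)) - (q1 (g1 (\<nu> * fst w)) - q1 (fst w)))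
            + cmod ((q2 (g2 (\<nu> * snd w)) - q2 (snd w)) - (q2 (g2 (\<nu> * fst w)) - q2 (fst w)))"
        using norm_Pair_le by metis
      also have "\<dots> \<le> (\<eta>/4 + \<eta>/4) + (\<eta>/4 + \<eta>/4)"
        using a1[OF inr(1)[OF w]] a1[OF inr(2)[OF w]] a2[OF inr(1)[OF w]] a2[OF inr(2)[OF w]]
        by (smt (verit) norm_triangle_ineq4)
      finally show "norm (F w - F0 q1 q2 w) \<le> \<eta>" by simp
    qed
    have cont: "continuous_on (cball (0::complex,b) \<rho>) F"
    proof -
      have cg: "continuous_on (ball 0 1) (\<lambda>z. q (g z))"
        if "q holomorphic_on ball 0 1" "g holomorphic_on ball 0 1" "\<forall>z. cmod z < 1 \<longrightarrow> cmod (g z) < 1"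
        for q g :: "complex \<Rightarrow> complex"
      proof -
        have "g ` ball 0 1 \<subseteq> ball 0 1" using that(3) by auto
        thus ?thesis using continuous_on_compose2[OF holomorphic_on_imp_continuous_on[OF that(1)]
            holomorphic_on_imp_continuous_on[OF that(2)]] by blast
      qed
      have ims: "(\<lambda>w. \<nu> * snd w) ` cball (0::complex,b) \<rho> \<subseteq> ball 0 1" "(\<lambda>w. \<nu> * fst w) ` cball (0::complex,b) \<rho> \<subseteq> ball 0 1"
      proof (rule_tac [!] image_subsetI)
        fix w assume w: "w \<in> cball (0::complex,b) \<rho>"
        show "\<nu> * snd w \<in> ball 0 1" using inr(2)[OF w] r nnu by (simp add: norm_mult)
        show "\<nu> * fst w \<in> ball 0 1" using inr(1)[OF w] r nnu by (simp add: norm_mult)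
      qed
      have c1: "continuous_on (cball (0::complex,b) \<rho>) (\<lambda>w. q1 (g1 (\<nu> * snd w)))"
        by (rule continuous_on_compose2[OF cg[OF hq1 g1(1,2)] _ ims(1)]) (intro continuous_intros)
      have c2: "continuous_on (cball (0::complex,b) \<rho>) (\<lambda>w. q1 (g1 (\<nu> * fst w)))"
        by (rule continuous_on_compose2[OF cg[OF hq1 g1(1,2)] _ ims(2)]) (intro continuous_intros)
      have c3: "continuous_on (cball (0::complex,b) \<rho>) (\<lambda>w. q2 (g2 (\<nu> * snd w)))"
        by (rule continuous_on_compose2[OF cg[OF hq2 g2(1,2)] _ ims(1)]) (intro continuous_intros)
      have c4: "continuous_on (cball (0::complex,b) \<rho>) (\<lambda>w. q2 (g2 (\<nu> * fst w)))"
        by (rule continuous_on_compose2[OF cg[OF hq2 g2(1,2)] _ ims(2)]) (intro continuous_intros)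
      show ?thesis unfolding F_def by (intro continuous_on_Pair continuous_on_diff c1 c2 c3 c4)
    qed
    obtain w where w: "w \<in> cball (0::complex,b) \<rho>" "F w = 0" using st[OF cont approx] by blast
    have ne: "fst w \<noteq> snd w"
    proof
      assume "fst w = snd w"
      hence "cmod b \<le> cmod (fst w) + cmod (snd w - b)" by (metis norm_minus_commute norm_triangle_sub add.commute diff_add_cancel norm_triangle_ineq4)
      thus False using cball_pair[OF w(1)] \<rho> b by simp
    qed
    show ?thesis
    proof (intro exI conjI)
      show "cmod (\<nu> * fst w) < 1" using inr(1)[OF w(1)] r nnu by (simp add: norm_mult)
      show "cmod (\<nu> * snd w) < 1" using inr(2)[OF w(1)] r nnu by (simp add: norm_mult)
      show "\<nu> * fst w \<noteq> \<nu> * snd w" using ne nnu by auto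
      show "q1 (g1 (\<nu> * fst w)) = q1 (g1 (\<nu> * snd w))" "q2 (g2 (\<nu> * fst w)) = q2 (g2 (\<nu> * snd w))"
        using w(2) by (simp_all add: F_def zero_prod_def)
    qed
  qed
  show ?thesis using \<theta>0 key by blast
qed

lemma deriv_comp_ball:
  fixes q g f :: "complex \<Rightarrow> complex"
  assumes hq: "q holomorphic_on ball 0 1" and hg: "g holomorphic_on ball 0 1"
    and gim: "\<And>z. cmod z < 1 \<Longrightarrow> cmod (g z) < 1"
    and eq: "\<And>z. cmod z < 1 \<Longrightarrow> f z = q (g z)" and w: "cmod w < 1"
  shows "deriv f w = deriv q (g w) * deriv g w"
proof -
  have "(q \<circ> g has_field_derivative deriv q (g w) * deriv g w) (at w)"
    by (rule DERIV_chain[OF hol_deriv[OF hq gim[OF w]] hol_deriv[OF hg w]])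
  hence "(f has_field_derivative deriv q (g w) * deriv g w) (at w)"
    by (rule has_field_derivative_transform_within_open[of _ _ _ "ball 0 1"]) (use w eq in auto)
  thus ?thesis by (rule DERIV_imp_deriv)
qed

lemma deriv_mob_comp:
  fixes p :: "complex \<Rightarrow> complex"
  assumes hp: "p holomorphic_on ball 0 1" and P: "mdet P > 0" and w: "cmod w < 1"
  shows "deriv (\<lambda>z. p (mob P z)) w = deriv p (mob P w) * dm P w"
proof -
  have "(p \<circ> mob P has_field_derivative deriv p (mob P w) * dm P w) (at w)"
    by (rule DERIV_chain[OF hol_deriv[OF hp mob_in_disc[OF P w]] mob_deriv[OF mden_nz[OF P w]]])
  thus ?thesis by (simp add: o_def DERIV_imp_deriv)
qed

lemma hol_comp_mob:
  fixes p :: "complex \<Rightarrow> complex"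
  assumes hp: "p holomorphic_on ball 0 1" and P: "mdet P > 0"
  shows "(\<lambda>z. p (mob P z)) holomorphic_on ball 0 1"
  by (rule holomorphic_on_compose_gen[OF mob_holo[OF P] hp, unfolded o_def]) (use mob_in_disc[OF P] in auto)

theorem proposition4:
  fixes D1 D2 :: "complex set" and p1 p2 :: "complex \<Rightarrow> complex"
  assumes "open D1" "connected D1" "open D2" "connected D2"
    and "p1 holomorphic_on unit_disc" "covering_space unit_disc p1 D1" "\<not> inj_on p1 unit_disc"
    and "p2 holomorphic_on unit_disc" "covering_space unit_disc p2 D2" "\<not> inj_on p2 unit_disc"
  shows "\<exists>z \<in> D1 \<times> D2. \<exists>X. hahn (D1 \<times> D2) z X \<noteq> kobayashi (D1 \<times> D2) z X"
proof -
  have oD1: "open D1" and oD2: "open D2" using assms by auto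
  have hp1: "p1 holomorphic_on ball 0 1" and cov1: "covering_space (ball 0 1) p1 D1"
    and ni1: "\<not> inj_on p1 (ball 0 1)" using assms by (auto simp: unit_disc_def)
  have hp2: "p2 holomorphic_on ball 0 1" and cov2: "covering_space (ball 0 1) p2 D2"
    and ni2: "\<not> inj_on p2 (ball 0 1)" using assms by (auto simp: unit_disc_def)
  have p1im: "p1 w \<in> D1" if "cmod w < 1" for w using covering_space_imp_surjective[OF cov1] that by auto
  have p2im: "p2 w \<in> D2" if "cmod w < 1" for w using covering_space_imp_surjective[OF cov2] that by auto
  obtain u1 v1 where uv1: "cmod u1 < 1" "cmod v1 < 1" "u1 \<noteq> v1" "p1 u1 = p1 v1"
    using ni1 unfolding inj_on_def by auto
  obtain u2 v2 where uv2: "cmod u2 < 1" "cmod v2 < 1" "u2 \<noteq> v2" "p2 u2 = p2 v2"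
    using ni2 unfolding inj_on_def by auto
  obtain Pb where Pb: "fpf Pb" "\<And>w. cmod w < 1 \<Longrightarrow> p1 (mob Pb w) = p1 w"
    using deck_exists[OF cov1 hp1 uv1] by blast
  obtain Pg where Pg: "fpf Pg" "\<And>w. cmod w < 1 \<Longrightarrow> p2 (mob Pg w) = p2 w"
    using deck_exists[OF cov2 hp2 uv2] by blast
  have dPb: "mdet Pb > 0" and dPg: "mdet Pg > 0" using Pb Pg by (auto simp: fpf_def)
  obtain X Y M a where XY: "X = Pb \<or> X = mmul Pb Pb" "Y = Pg \<or> Y = madj Pg" and M: "mdet M > 0"
    and a: "cmod a < 1" and ne: "mob X a \<noteq> a" and cm: "mob M (mob X a) = mob Y (mob M a)"
    and dmc: "dm X a * dm M (mob X a) \<noteq> dm Y (mob M a) * dm M a"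
    using config[OF Pb(1) Pg(1)] by blast
  have dX: "mdet X > 0" using XY dPb by (auto simp: mdet_mmul)
  have dY: "mdet Y > 0" using XY dPg by auto
  have deckX: "p1 (mob X w) = p1 w" if w: "cmod w < 1" for w
    using XY(1)
  proof
    assume "X = mmul Pb Pb"
    hence "mob X w = mob Pb (mob Pb w)" using mob_mmul[OF dPb dPb w] by simp
    thus ?thesis using Pb(2) mob_in_disc[OF dPb w] w by simp
  qed (use Pb(2) w in simp)
  have deckY: "p2 (mob Y w) = p2 w" if w: "cmod w < 1" for w
    using XY(2)
  proof
    assume Y: "Y = madj Pg"
    have w': "cmod (mob (madj Pg) w) < 1" using mob_in_disc[of "madj Pg"] dPg w by simp
    have "p2 (mob Pg (mob (madj Pg) w)) = p2 (mob (madj Pg) w)" using Pg(2)[OF w'] .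
    thus ?thesis using mob_madj'[OF dPg w] Y by simp
  qed (use Pg(2) w in simp)
  define T where "T = Ta a"
  have dT: "mdet T > 0" "mdet (madj T) > 0" using mdet_Ta_pos[OF a] by (auto simp: T_def)
  define a' where "a' = mob X a"
  define s where "s = mob M a"
  define s' where "s' = mob M a'"
  have a'1: "cmod a' < 1" using mob_in_disc[OF dX a] by (simp add: a'_def)
  have s1: "cmod s < 1" using mob_in_disc[OF M a] by (simp add: s_def)
  have s'1: "cmod s' < 1" using mob_in_disc[OF M a'1] by (simp add: s'_def)
  have s's: "s' = mob Y s" using cm by (simp add: s'_def s_def a'_def)
  define b where "b = mob (madj T) a'"
  have b1: "cmod b < 1" using mob_in_disc[OF dT(2) a'1] by (simp add: b_def)
  have Tb: "mob T b = a'" using mob_madj'[OF dT(1) a'1] by (simp add: b_def)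
  have T0: "mob T 0 = a" by (simp add: T_def mob_Ta0)
  have b0: "b \<noteq> 0" using Tb T0 ne by (auto simp: a'_def)
  define q1 where "q1 z = p1 (mob T z)" for z
  define q2 where "q2 z = p2 (mob M (mob T z))" for z
  have hq1: "q1 holomorphic_on ball 0 1" unfolding q1_def by (rule hol_comp_mob[OF hp1 dT(1)])
  have hpM: "(\<lambda>z. p2 (mob M z)) holomorphic_on ball 0 1" by (rule hol_comp_mob[OF hp2 M])
  have hq2: "q2 holomorphic_on ball 0 1" unfolding q2_def by (rule hol_comp_mob[OF hpM dT(1)])
  have q1im: "q1 z \<in> D1" if "cmod z < 1" for z using p1im mob_in_disc[OF dT(1) that] by (simp add: q1_def)
  have q2im: "q2 z \<in> D2" if "cmod z < 1" for z using p2im mob_in_disc[OF M mob_in_disc[OF dT(1) that]] by (simp add: q2_def)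
  have dp1: "q1 b = q1 0" using Tb T0 deckX[OF a] by (simp add: q1_def a'_def)
  have dp2: "q2 b = q2 0" using Tb T0 deckY[OF s1] s's by (simp add: q2_def s'_def s_def)
  have dq1: "deriv q1 z = deriv p1 (mob T z) * dm T z" if "cmod z < 1" for z
    unfolding q1_def by (rule deriv_mob_comp[OF hp1 dT(1) that])
  have dq2: "deriv q2 z = deriv p2 (mob M (mob T z)) * dm M (mob T z) * dm T z" if "cmod z < 1" for z
  proof -
    have "deriv q2 z = deriv (\<lambda>z. p2 (mob M z)) (mob T z) * dm T z"
      unfolding q2_def by (rule deriv_mob_comp[OF hpM dT(1) that])
    also have "deriv (\<lambda>z. p2 (mob M z)) (mob T z) = deriv p2 (mob M (mob T z)) * dm M (mob T z)"
      by (rule deriv_mob_comp[OF hp2 M mob_in_disc[OF dT(1) that]])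
    finally show ?thesis by simp
  qed
  have np1: "deriv p1 w \<noteq> 0" if "cmod w < 1" for w by (rule cov_deriv_nz[OF cov1 hp1 that])
  have np2: "deriv p2 w \<noteq> 0" if "cmod w < 1" for w by (rule cov_deriv_nz[OF cov2 hp2 that])
  have dmT0: "dm T 0 \<noteq> 0" "dm T b \<noteq> 0" using dm_nz[OF dT(1)] b1 by auto
  have q10: "deriv q1 0 \<noteq> 0" using dq1[of 0] np1[OF a] dmT0 T0 by simp
  have q20: "deriv q2 0 \<noteq> 0" using dq2[of 0] np2[OF s1] dmT0 T0 dm_nz[OF M a] by (simp add: s_def)
  have tr: "deriv q1 0 * deriv q2 b \<noteq> deriv q1 b * deriv q2 0"
  proof -
    have e1: "deriv p1 a = deriv p1 a' * dm X a"
      using deck_deriv[OF hp1 dX _ a] deckX by (simp add: a'_def)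
    have e2: "deriv p2 s = deriv p2 s' * dm Y s"
      using deck_deriv[OF hp2 dY _ s1] deckY by (simp add: s's)
    have L: "deriv q1 0 * deriv q2 b = (deriv p1 a' * deriv p2 s' * dm T 0 * dm T b) * (dm X a * dm M a')"
      using dq1[of 0] dq2[OF b1] T0 Tb e1 by (simp add: s'_def algebra_simps)
    have R: "deriv q1 b * deriv q2 0 = (deriv p1 a' * deriv p2 s' * dm T 0 * dm T b) * (dm Y s * dm M a)"
      using dq1[OF b1] dq2[of 0] T0 Tb e2 by (simp add: s_def algebra_simps)
    have nz: "deriv p1 a' * deriv p2 s' * dm T 0 * dm T b \<noteq> 0" using np1[OF a'1] np2[OF s'1] dmT0 by simp
    have "dm X a * dm M a' \<noteq> dm Y s * dm M a" using dmc by (simp add: a'_def s_def)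
    thus ?thesis unfolding L R using nz by simp
  qed
  obtain \<theta> where \<theta>0: "\<theta> > 0" and NI: "\<forall>g1 g2 c. g1 holomorphic_on ball 0 1 \<longrightarrow> (\<forall>z. cmod z < 1 \<longrightarrow> cmod (g1 z) < 1) \<longrightarrow> g1 0 = 0
     \<longrightarrow> deriv g1 0 = c \<longrightarrow> g2 holomorphic_on ball 0 1 \<longrightarrow> (\<forall>z. cmod z < 1 \<longrightarrow> cmod (g2 z) < 1) \<longrightarrow> g2 0 = 0
     \<longrightarrow> deriv g2 0 = c \<longrightarrow> 1 - \<theta> < cmod c
     \<longrightarrow> (\<exists>\<zeta> \<zeta>'. cmod \<zeta> < 1 \<and> cmod \<zeta>' < 1 \<and> \<zeta> \<noteq> \<zeta>' \<and> q1 (g1 \<zeta>) = q1 (g1 \<zeta>') \<and> q2 (g2 \<zeta>) = q2 (g2 \<zeta>'))"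
    using noninj[OF hq1 hq2 b1 b0 dp1 dp2 tr] by blast
  define \<theta>' where "\<theta>' = min \<theta> (1/2)"
  have \<theta>'0: "0 < \<theta>'" "\<theta>' \<le> 1/2" "\<theta>' \<le> \<theta>" using \<theta>0 by (auto simp: \<theta>'_def)
  define z0 where "z0 = (q1 0, q2 0)"
  define Xv where "Xv = (deriv q1 0, deriv q2 0)"
  have z0D: "z0 \<in> D1 \<times> D2" using q1im[of 0] q2im[of 0] by (simp add: z0_def)
  define SK where "SK = {cmod \<alpha> | \<alpha>. \<exists>f. hol_disc_map (D1 \<times> D2) f \<and> f 0 = z0 \<and> cscale \<alpha> (deriv0 f) = Xv}"
  define SH where "SH = {cmod \<alpha> | \<alpha>. \<exists>f. hol_disc_map (D1 \<times> D2) f \<and> inj_on f unit_disc \<and> f 0 = z0 \<and> cscale \<alpha> (deriv0 f) = Xv}"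
  have K1: "kobayashi (D1 \<times> D2) z0 Xv \<le> 1"
  proof -
    define f0 where "f0 z = (q1 z, q2 z)" for z
    have "hol_disc_map (D1 \<times> D2) f0"
      unfolding hol_disc_map_def f0_def unit_disc_def using hq1 hq2 q1im q2im by auto
    moreover have "deriv0 f0 = Xv" by (simp add: deriv0_def f0_def Xv_def)
    ultimately have "\<exists>f. hol_disc_map (D1 \<times> D2) f \<and> f 0 = z0 \<and> cscale 1 (deriv0 f) = Xv"
      by (intro exI[of _ f0]) (simp add: cscale_def z0_def f0_def)
    hence "cmod 1 \<in> SK" unfolding SK_def by blast
    moreover have "bdd_below SK" unfolding SK_def by (intro bdd_belowI[of _ 0]) auto
    ultimately have "Inf SK \<le> 1" using cInf_lower by fastforce
    thus ?thesis by (simp add: kobayashi_def SK_def)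
  qed
  have lower: "1 / (1 - \<theta>') \<le> x" if xS: "x \<in> SH" for x
  proof -
    obtain \<alpha> f where x: "x = cmod \<alpha>" and f: "hol_disc_map (D1 \<times> D2) f" "inj_on f (ball 0 1)" "f 0 = z0"
      "cscale \<alpha> (deriv0 f) = Xv"
      using xS unfolding SH_def unit_disc_def by blast
    define f1 where "f1 = (\<lambda>z. fst (f z))"
    define f2 where "f2 = (\<lambda>z. snd (f z))"
    have hf1: "f1 holomorphic_on ball 0 1" and hf2: "f2 holomorphic_on ball 0 1"
      using f(1) by (auto simp: hol_disc_map_def f1_def f2_def unit_disc_def)
    have f1im: "f1 \<in> ball 0 1 \<rightarrow> D1" and f2im: "f2 \<in> ball 0 1 \<rightarrow> D2"
      using f(1) by (auto simp: hol_disc_map_def f1_def f2_def unit_disc_def mem_Times_iff)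
    have f10: "f1 0 = p1 a" using f(3) T0 by (simp add: f1_def z0_def q1_def)
    have f20: "f2 0 = p2 s" using f(3) T0 by (simp add: f2_def z0_def q2_def s_def)
    obtain G1 where G1: "G1 holomorphic_on ball 0 1" "G1 \<in> ball 0 1 \<rightarrow> ball 0 1" "G1 0 = a" "\<forall>y\<in>ball 0 1. p1 (G1 y) = f1 y"
      using hlift[OF cov1 hp1 hf1 f1im a f10] by blast
    obtain G2 where G2: "G2 holomorphic_on ball 0 1" "G2 \<in> ball 0 1 \<rightarrow> ball 0 1" "G2 0 = s" "\<forall>y\<in>ball 0 1. p2 (G2 y) = f2 y"
      using hlift[OF cov2 hp2 hf2 f2im s1 f20] by blast
    have dMT: "mdet (madj M) > 0" using M by simp
    define g1 where "g1 z = mob (madj T) (G1 z)" for z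
    define g2 where "g2 z = mob (madj T) (mob (madj M) (G2 z))" for z
    have G1n: "cmod (G1 z) < 1" if "cmod z < 1" for z using G1(2) that by auto
    have G2n: "cmod (G2 z) < 1" if "cmod z < 1" for z using G2(2) that by auto
    have hg1: "g1 holomorphic_on ball 0 1"
      unfolding g1_def by (rule holomorphic_on_compose_gen[OF G1(1) mob_holo[OF dT(2)], unfolded o_def]) (use G1n in auto)
    have hMG: "(\<lambda>z. mob (madj M) (G2 z)) holomorphic_on ball 0 1"
      by (rule holomorphic_on_compose_gen[OF G2(1) mob_holo[OF dMT], unfolded o_def]) (use G2n in auto)
    have g1n: "\<forall>z. cmod z < 1 \<longrightarrow> cmod (g1 z) < 1" using mob_in_disc[OF dT(2)] G1n by (simp add: g1_def)
    have MGn: "cmod (mob (madj M) (G2 z)) < 1" if "cmod z < 1" for z using mob_in_disc[OF dMT G2n[OF that]] .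
    have hg2: "g2 holomorphic_on ball 0 1"
      unfolding g2_def by (rule holomorphic_on_compose_gen[OF hMG mob_holo[OF dT(2)], unfolded o_def]) (use MGn in auto)
    have g2n: "\<forall>z. cmod z < 1 \<longrightarrow> cmod (g2 z) < 1" using mob_in_disc[OF dT(2)] MGn by (simp add: g2_def)
    have g10: "g1 0 = 0" using G1(3) by (simp add: g1_def T_def mob_madjTa)
    have g20: "g2 0 = 0" using G2(3) mob_madj[OF M a] by (simp add: g2_def s_def T_def mob_madjTa)
    have qg1: "f1 z = q1 (g1 z)" if "cmod z < 1" for z
      using G1(4) mob_madj'[OF dT(1) G1n[OF that]] that by (simp add: q1_def g1_def)
    have qg2: "f2 z = q2 (g2 z)" if "cmod z < 1" for z
      using G2(4) mob_madj'[OF dT(1) MGn[OF that]] mob_madj'[OF M G2n[OF that]] that by (simp add: q2_def g2_def)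
    have df1: "deriv f1 0 = deriv q1 0 * deriv g1 0"
      using deriv_comp_ball[OF hq1 hg1 _ qg1, of 0] g1n g10 by simp
    have df2: "deriv f2 0 = deriv q2 0 * deriv g2 0"
      using deriv_comp_ball[OF hq2 hg2 _ qg2, of 0] g2n g20 by simp
    have e1: "\<alpha> * deriv f1 0 = deriv q1 0" and e2: "\<alpha> * deriv f2 0 = deriv q2 0"
      using f(4) by (simp_all add: cscale_def deriv0_def Xv_def f1_def f2_def)
    have a0: "\<alpha> \<noteq> 0" using e1 q10 by auto
    have c1: "deriv g1 0 = 1 / \<alpha>" using e1 df1 q10 a0 by (simp add: field_simps)
    have c2: "deriv g2 0 = 1 / \<alpha>" using e2 df2 q20 a0 by (simp add: field_simps)
    have "cmod (1 / \<alpha>) \<le> 1 - \<theta>'"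
    proof (rule ccontr)
      assume "\<not> cmod (1 / \<alpha>) \<le> 1 - \<theta>'"
      hence "1 - \<theta> < cmod (1 / \<alpha>)" using \<theta>'0 by linarith
      then obtain \<zeta> \<zeta>' where z: "cmod \<zeta> < 1" "cmod \<zeta>' < 1" "\<zeta> \<noteq> \<zeta>'" "q1 (g1 \<zeta>) = q1 (g1 \<zeta>')" "q2 (g2 \<zeta>) = q2 (g2 \<zeta>')"
        using NI[rule_format, OF hg1 g1n[rule_format] g10 c1 hg2 g2n[rule_format] g20 c2] by blast
      have "f \<zeta> = f \<zeta>'"
        using qg1[OF z(1)] qg1[OF z(2)] qg2[OF z(1)] qg2[OF z(2)] z(4,5) by (simp add: f1_def f2_def prod_eq_iff)
      thus False using f(2) z by (auto simp: inj_on_def)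
    qed
    hence "1 / cmod \<alpha> \<le> 1 - \<theta>'" by (simp add: norm_divide)
    hence "1 \<le> (1 - \<theta>') * cmod \<alpha>" using a0 by (simp add: field_simps)
    thus ?thesis unfolding x using \<theta>'0 by (simp add: field_simps)
  qed
  have SHne: "SH \<noteq> {}"
  proof -
    obtain r1 where r1: "r1 > 0" "ball (q1 0) r1 \<subseteq> D1" using oD1 q1im[of 0] open_contains_ball by force
    obtain r2 where r2: "r2 > 0" "ball (q2 0) r2 \<subseteq> D2" using oD2 q2im[of 0] open_contains_ball by force
    define d1 where "d1 = deriv q1 0"
    define d2 where "d2 = deriv q2 0"
    define \<epsilon> where "\<epsilon> = min (r1 / (cmod d1 + 1)) (r2 / (cmod d2 + 1))"
    have pd: "cmod d1 + 1 > 0" "cmod d2 + 1 > 0" by (smt (verit) norm_ge_zero)+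
    have \<epsilon>0: "\<epsilon> > 0" using r1 r2 pd by (simp add: \<epsilon>_def)
    have \<epsilon>1: "\<epsilon> * (cmod d1 + 1) \<le> r1" "\<epsilon> * (cmod d2 + 1) \<le> r2"
    proof -
      have "\<epsilon> \<le> r1 / (cmod d1 + 1)" "\<epsilon> \<le> r2 / (cmod d2 + 1)" by (simp_all add: \<epsilon>_def)
      thus "\<epsilon> * (cmod d1 + 1) \<le> r1" "\<epsilon> * (cmod d2 + 1) \<le> r2" using pd by (simp_all add: pos_le_divide_eq)
    qed
    define f where "f z = (q1 0 + of_real \<epsilon> * z * d1, q2 0 + of_real \<epsilon> * z * d2)" for z
    have im: "f z \<in> D1 \<times> D2" if "cmod z < 1" for z
    proof -
      have zz: "cmod z * cmod d1 \<le> cmod d1" "cmod z * cmod d2 \<le> cmod d2" using that by (simp_all add: mult_left_le_one_le)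
      have n1: "cmod (of_real \<epsilon> * z * d1) = \<epsilon> * (cmod z * cmod d1)" "cmod (of_real \<epsilon> * z * d2) = \<epsilon> * (cmod z * cmod d2)"
        using \<epsilon>0 by (simp_all add: norm_mult)
      have "cmod (of_real \<epsilon> * z * d1) \<le> \<epsilon> * cmod d1" unfolding n1 using zz \<epsilon>0 by (simp add: mult_left_mono)
      moreover have "\<epsilon> * cmod d1 < r1" using \<epsilon>1 \<epsilon>0 by (simp add: field_simps)
      moreover have "cmod (of_real \<epsilon> * z * d2) \<le> \<epsilon> * cmod d2" unfolding n1 using zz \<epsilon>0 by (simp add: mult_left_mono)
      moreover have "\<epsilon> * cmod d2 < r2" using \<epsilon>1 \<epsilon>0 by (simp add: field_simps)
      ultimately show ?thesis using r1 r2 by (auto simp: f_def dist_norm subset_iff)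
    qed
    have hol: "hol_disc_map (D1 \<times> D2) f"
      unfolding hol_disc_map_def unit_disc_def using im by (auto simp: f_def intro!: holomorphic_intros)
    have inj: "inj_on f unit_disc"
      using \<epsilon>0 q10 by (auto simp: inj_on_def f_def d1_def)
    have "deriv (\<lambda>z. fst (f z)) 0 = of_real \<epsilon> * d1"
      by (rule DERIV_imp_deriv) (auto simp: f_def intro!: derivative_eq_intros)
    moreover have "deriv (\<lambda>z. snd (f z)) 0 = of_real \<epsilon> * d2"
      by (rule DERIV_imp_deriv) (auto simp: f_def intro!: derivative_eq_intros)
    ultimately have "cscale (1 / of_real \<epsilon>) (deriv0 f) = Xv"
      using \<epsilon>0 by (simp add: deriv0_def cscale_def Xv_def d1_def d2_def)
    moreover have "f 0 = z0" by (simp add: f_def z0_def)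
    ultimately have "cmod (1 / of_real \<epsilon>) \<in> SH" unfolding SH_def using hol inj by blast
    thus ?thesis by blast
  qed
  have "1 / (1 - \<theta>') \<le> Inf SH" by (rule cInf_greatest[OF SHne lower])
  hence H: "1 / (1 - \<theta>') \<le> hahn (D1 \<times> D2) z0 Xv" by (simp add: hahn_def SH_def)
  have "1 < 1 / (1 - \<theta>')" using \<theta>'0 by (simp add: field_simps)
  hence "hahn (D1 \<times> D2) z0 Xv \<noteq> kobayashi (D1 \<times> D2) z0 Xv" using H K1 by linarith
  thus ?thesis using z0D by blast
qed


end
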